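(* Let $(R,pR)$ be a discrete valuation domain with valuation $\mathsf{v}$ and finite residue field. Let $f\in R[x]$ be a primitive, non-constant polynomial with $n:=\mathsf{v}(\operatorname{d}(f))\in\mathbb{N}$ (so $n\ge1$), and assume that $f$ is not a proper power of another polynomial in $R[x]$ (i.e. $f$ is not associated to $h^k$ for any $h\in R[x]$ and integer $k\ge 2$). Then $\frac{f}{p^n}$ is absolutely irreducible in $\operatorname{Int}(R)$ if and only if $\operatorname{fdk}(f)=\mathbf{0}$.
   Context: $(R,pR)$ is a discrete valuation domain with valuation $\mathsf{v}$, finite residue field, and quotient field $K$. $\operatorname{Int}(R)=\{F\in K[x]\mid F(R)\subseteq R\}$. For $f\in R[x]$, $\operatorname{d}(f)=\gcd(f(a)\mid a\in R)$, so $\mathsf{v}(\operatorname{d}(f))=\min_{a\in R}\mathsf{v}(f(a))$. Primitive means the coefficients generate $R$. An irreducible divisor set $\mathcal{P}$ of $f$ is a set of representatives of the associate classes of irreducible divisors of $f$ in $R[x]$. $\mathcal{W}(f)=\{a\in R\mid \mathsf{v}(f(a))=\mathsf{v}(\operatorname{d}(f))\}$, and $$\operatorname{fdk}(f)=\Big\{(u_g)_{g\in\mathcal{P}}\in\mathbb{Q}^{\mathcal{P}}\ \Big|\ \forall a\in\mathcal{W}(f):\ \textstyle\sum_{g\in\mathcal{P}}u_g\,\mathsf{v}(g(a))=0\Big\}$$ (whether it is zero does not depend on the choice of $\mathcal{P}$). An irreducible element $r$ of a commutative ring is absolutely irreducible if for every $k\in\mathbb{N}$ every factorization of $r^k$ into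 irreducibles is essentially the same as $r\cdots r$ (same number of factors, pairwise associated after reindexing). *)

theory Defs
  imports "HOL-Computational_Algebra.Computational_Algebra"
begin

definition dvr_with_uniformizer :: "'a::idom \<Rightarrow> bool" where
  "dvr_with_uniformizer p \<longleftrightarrow> p \<noteq> 0 \<and> \<not> p dvd 1 \<and>
     (\<forall>a. a \<noteq> 0 \<longrightarrow> (\<exists>u k. u dvd 1 \<and> a = u * p ^ k))"

definition finite_residue_field :: "'a::idom \<Rightarrow> bool" where
  "finite_residue_field p \<longleftrightarrow> finite (range (\<lambda>a. {b. p dvd (a - b)}))"

definition val :: "'a::idom \<Rightarrow> 'a \<Rightarrow> nat" where
  "val p a = Max {k. p ^ k dvd a}"

text \<open>v(d(f)) = min over a in R of v(f(a)) (v(0) = infinity, so zeros of f are ignored).\<close>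
definition vd :: "'a::idom \<Rightarrow> 'a poly \<Rightarrow> nat" where
  "vd p f = (LEAST k. \<exists>a. poly f a \<noteq> 0 \<and> val p (poly f a) = k)"

definition W_set :: "'a::idom \<Rightarrow> 'a poly \<Rightarrow> 'a set" where
  "W_set p f = {a. poly f a \<noteq> 0 \<and> val p (poly f a) = vd p f}"

definition primitive_poly :: "'a::idom poly \<Rightarrow> bool" where
  "primitive_poly f \<longleftrightarrow> (\<exists>c. (\<Sum>i\<le>degree f. c i * coeff f i) = 1)"

definition assoc_poly :: "'a::idom poly \<Rightarrow> 'a poly \<Rightarrow> bool" where
  "assoc_poly g h \<longleftrightarrow> g dvd h \<and> h dvd g"

definition irreducible_divisor_set :: "'a::idom poly \<Rightarrow> 'a poly set \<Rightarrow> bool" where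
  "irreducible_divisor_set f P \<longleftrightarrow>
     (\<forall>g\<in>P. irreducible g \<and> g dvd f) \<and>
     (\<forall>g. irreducible g \<and> g dvd f \<longrightarrow> (\<exists>q\<in>P. assoc_poly g q)) \<and>
     (\<forall>g\<in>P. \<forall>h\<in>P. assoc_poly g h \<longrightarrow> g = h)"

text \<open>fdk(f) = 0: the only rational vector indexed by P orthogonal to all
valuation vectors (v(g(a)))_{g in P}, a in W(f), is zero.\<close>
definition fdk_zero :: "'a::idom \<Rightarrow> 'a poly \<Rightarrow> 'a poly set \<Rightarrow> bool" where
  "fdk_zero p f P \<longleftrightarrow>
     (\<forall>u :: 'a poly \<Rightarrow> rat.
        (\<forall>a\<in>W_set p f. (\<Sum>g\<in>P. u g * of_nat (val p (poly g a))) = 0) \<longrightarrow>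
        (\<forall>g\<in>P. u g = 0))"

definition IntR :: "'a::idom fract poly set" where
  "IntR = {F. \<forall>a. poly F (to_fract a) \<in> range to_fract}"

definition IntR_unit :: "'a::idom fract poly \<Rightarrow> bool" where
  "IntR_unit F \<longleftrightarrow> F \<in> IntR \<and> (\<exists>G\<in>IntR. F * G = 1)"

definition IntR_irreducible :: "'a::idom fract poly \<Rightarrow> bool" where
  "IntR_irreducible F \<longleftrightarrow> F \<in> IntR \<and> F \<noteq> 0 \<and> \<not> IntR_unit F \<and>
     (\<forall>G\<in>IntR. \<forall>H\<in>IntR. F = G * H \<longrightarrow> IntR_unit G \<or> IntR_unit H)"

definition IntR_assoc :: "'a::idom fract poly \<Rightarrow> 'a fract poly \<Rightarrow> bool" where
  "IntR_assoc F G \<longleftrightarrow> (\<exists>u. IntR_unit u \<and> F = u * G)"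

definition IntR_abs_irreducible :: "'a::idom fract poly \<Rightarrow> bool" where
  "IntR_abs_irreducible F \<longleftrightarrow> IntR_irreducible F \<and>
     (\<forall>k::nat. k \<ge> 1 \<longrightarrow> (\<forall>qs. (\<forall>q\<in>set qs. IntR_irreducible q) \<and> prod_list qs = F ^ k \<longrightarrow>
        length qs = k \<and> (\<forall>q\<in>set qs. IntR_assoc q F)))"

end

theory Submission
  imports Defs
begin


locale dvr =
  fixes p :: "'a::idom"
  assumes dvr: "dvr_with_uniformizer p"
begin

lemma p_nz: "p \<noteq> 0" and p_nunit: "\<not> p dvd 1"
  using dvr unfolding dvr_with_uniformizer_def by auto

lemma decomp: "a \<noteq> 0 \<Longrightarrow> \<exists>u k. u dvd 1 \<and> a = u * p^k"
  using dvr unfolding dvr_with_uniformizer_def by auto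

lemma unit_not_p: "u dvd 1 \<Longrightarrow> \<not> p dvd u"
  using p_nunit dvd_trans by blast

lemma ppow_dvd_iff: assumes u: "u dvd 1" shows "p^j dvd u * p^k \<longleftrightarrow> j \<le> k"
proof
  assume h: "p^j dvd u*p^k"
  show "j \<le> k"
  proof (rule ccontr)
    assume "\<not> j \<le> k"
    then have "p^k * p dvd p^j" by (metis le_imp_power_dvd not_less_eq_eq power_Suc2)
    with h have "p^k * p dvd p^k * u" by (metis dvd_trans mult.commute)
    then have "p dvd u" using p_nz by (simp add: dvd_mult_cancel_left)
    with u unit_not_p show False by blast
  qed
next
  assume "j \<le> k" then show "p^j dvd u*p^k" by (simp add: le_imp_power_dvd)
qed

lemma ppow_nz: "p^k \<noteq> 0" using p_nz by simp

lemma val_decomp: assumes "u dvd 1" shows "val p (u * p^k) = k"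
proof -
  have "{j. p^j dvd u*p^k} = {..k}" using ppow_dvd_iff[OF assms] by auto
  then show ?thesis unfolding val_def by (auto intro!: Max_eqI)
qed

lemma val_dvd_iff: assumes "a \<noteq> 0" shows "p^j dvd a \<longleftrightarrow> j \<le> val p a"
proof -
  obtain u k where uk: "u dvd 1" "a = u*p^k" using decomp[OF assms] by blast
  have "val p a = k" unfolding uk(2) by (rule val_decomp[OF uk(1)])
  then show ?thesis using ppow_dvd_iff[OF uk(1)] uk(2) by simp
qed

lemma val_exp: assumes "a \<noteq> 0" obtains u where "u dvd 1" "u * p^(val p a) = a"
proof -
  obtain u k where uk: "u dvd 1" "a = u*p^k" using decomp[OF assms] by blast
  have "val p a = k" unfolding uk(2) by (rule val_decomp[OF uk(1)])
  then show ?thesis using that uk by simp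
qed

lemma val_mult: assumes "a \<noteq> 0" "b \<noteq> 0" shows "val p (a*b) = val p a + val p b"
proof -
  obtain u where u: "u dvd 1" "u * p^(val p a) = a" using val_exp[OF assms(1)] .
  obtain w where w: "w dvd 1" "w * p^(val p b) = b" using val_exp[OF assms(2)] .
  have "a*b = (u*w) * p^(val p a + val p b)" unfolding power_add
    by (subst u(2)[symmetric], subst w(2)[symmetric]) (simp add: algebra_simps)
  moreover have "u*w dvd 1" using u w by (metis mult_dvd_mono mult_1_right)
  ultimately show ?thesis using val_decomp by simp
qed

lemma val_unit: "u dvd 1 \<Longrightarrow> val p u = 0" using val_decomp[of u 0] by simp

lemma val_p: "val p p = 1" using val_decomp[of 1 1] by simp

lemma val_power: "a \<noteq> 0 \<Longrightarrow> val p (a^k) = k * val p a"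
  by (induction k) (auto simp: val_mult val_unit)

lemma val_prod: "(\<And>x. x \<in> A \<Longrightarrow> g x \<noteq> 0) \<Longrightarrow> val p (\<Prod>x\<in>A. g x) = (\<Sum>x\<in>A. val p (g x))"
proof (induction A rule: infinite_finite_induct)
  case (insert x F) then show ?case by (simp add: val_mult)
qed (auto simp: val_unit)

lemma val_prod_list: "(\<And>x. x \<in> set xs \<Longrightarrow> x \<noteq> 0) \<Longrightarrow> val p (prod_list xs) = (\<Sum>x\<leftarrow>xs. val p x)"
proof (induction xs)
  case (Cons a xs)
  then have "prod_list xs \<noteq> 0" by (auto simp: prod_list_zero_iff)
  with Cons show ?case by (simp add: val_mult)
qed (simp add: val_unit)

lemma not_p_unit: "\<not> p dvd c \<Longrightarrow> c dvd 1"
proof -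
  assume h: "\<not> p dvd c"
  then have "c \<noteq> 0" by auto
  then obtain u k where "u dvd 1" "c = u*p^k" using decomp by blast
  with h show ?thesis by (cases k) auto
qed

lemma p_prime: "p dvd a * b \<Longrightarrow> p dvd a \<or> p dvd b"
proof (rule ccontr)
  assume h: "p dvd a*b" "\<not> (p dvd a \<or> p dvd b)"
  then have "a dvd 1" "b dvd 1" using not_p_unit by auto
  then have "a*b dvd 1" by (metis mult_dvd_mono mult_1_right)
  with h unit_not_p show False by blast
qed

lemma p_prime_power: "p dvd a ^ k \<Longrightarrow> p dvd a"
proof (induction k)
  case 0 then show ?case using p_nunit by simp
next
  case (Suc k) then show ?case using p_prime[of a "a^k"] by auto
qed

lemma R_infinite: "infinite (UNIV :: 'a set)"
proof
  assume fin: "finite (UNIV :: 'a set)"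
  have "inj (\<lambda>k::nat. p^k)"
  proof (rule injI)
    fix i j :: nat assume "p^i = p^j"
    then have "val p (1 * p^i) = val p (1*p^j)" by simp
    then show "i = j" by (simp only: val_decomp[OF one_dvd])
  qed
  then have "infinite (range (\<lambda>k::nat. p^k))" by (simp add: finite_image_iff)
  with fin show False using finite_subset[OF subset_UNIV] by metis
qed

end


context dvr begin

definition prim :: "'a poly \<Rightarrow> bool" where
  "prim g \<longleftrightarrow> (\<exists>i. \<not> p dvd coeff g i)"

lemma prim_nz: "prim g \<Longrightarrow> g \<noteq> 0"
  unfolding prim_def by auto

lemma primitive_prim: assumes "primitive_poly f" shows "prim f"
proof (rule ccontr)
  assume "\<not> prim f"
  then have all: "\<forall>i. p dvd coeff f i" unfolding prim_def by auto
  obtain c where c: "(\<Sum>i\<le>degree f. c i * coeff f i) = 1" using assms unfolding primitive_poly_def by blast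
  have "p dvd (\<Sum>i\<le>degree f. c i * coeff f i)" using all by (intro dvd_sum) auto
  with c p_nunit show False by simp
qed

lemma prim_mult: assumes a: "prim a" and b: "prim b" shows "prim (a*b)"
proof -
  define i where "i = (LEAST i. \<not> p dvd coeff a i)"
  define j where "j = (LEAST j. \<not> p dvd coeff b j)"
  have ai: "\<not> p dvd coeff a i" using a unfolding prim_def i_def by (metis LeastI)
  have bj: "\<not> p dvd coeff b j" using b unfolding prim_def j_def by (metis LeastI)
  have lt_a: "p dvd coeff a k" if "k < i" for k using that unfolding i_def by (metis not_less_Least)
  have lt_b: "p dvd coeff b k" if "k < j" for k using that unfolding j_def by (metis not_less_Least)
  have "coeff (a*b) (i+j) = coeff a i * coeff b (i+j-i) + (\<Sum>k\<in>{..i+j}-{i}. coeff a k * coeff b (i+j-k))"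
    unfolding coeff_mult by (subst sum.remove[of _ i]) auto
  moreover have "p dvd (\<Sum>k\<in>{..i+j}-{i}. coeff a k * coeff b (i+j-k))"
  proof (rule dvd_sum)
    fix k assume "k \<in> {..i+j}-{i}"
    then have "k < i \<or> (k > i \<and> i+j-k < j)" by auto
    then show "p dvd coeff a k * coeff b (i+j-k)" using lt_a lt_b by auto
  qed
  moreover have "\<not> p dvd coeff a i * coeff b j" using p_prime ai bj by blast
  ultimately have "\<not> p dvd coeff (a*b) (i+j)" by (simp add: dvd_add_left_iff)
  then show ?thesis unfolding prim_def by blast
qed

lemma prim_1: "prim 1"
  unfolding prim_def using p_nunit by (intro exI[of _ 0]) simp

lemma prim_power: "prim a \<Longrightarrow> prim (a^k)"
  by (induction k) (auto simp: prim_1 prim_mult)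

lemma prim_prod_list: "(\<And>x. x \<in> set xs \<Longrightarrow> prim x) \<Longrightarrow> prim (prod_list xs)"
  by (induction xs) (auto simp: prim_1 prim_mult)

lemma prim_smult_unit: "prim g \<Longrightarrow> u dvd 1 \<Longrightarrow> prim (smult u g)"
proof -
  assume g: "prim g" and u: "u dvd 1"
  then obtain i where i: "\<not> p dvd coeff g i" unfolding prim_def by blast
  have "\<not> p dvd u * coeff g i" using p_prime i unit_not_p[OF u] by blast
  then show ?thesis unfolding prim_def by auto
qed

lemma all_dvd_smult: "(\<forall>i. p dvd coeff h i) \<Longrightarrow> \<exists>h1. h = smult p h1"
proof (induction h)
  case (pCons a h)
  have "\<forall>i. p dvd coeff h i"
  proof
    fix i show "p dvd coeff h i" using pCons(3) by (metis coeff_pCons_Suc)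
  qed
  then obtain h1 where h1: "h = smult p h1" using pCons by blast
  have "p dvd a" using pCons(3) by (metis coeff_pCons_0)
  then obtain a1 where "a = p * a1" by (auto simp: dvd_def)
  with h1 have "pCons a h = smult p (pCons a1 h1)" by simp
  then show ?case by blast
qed simp

lemma not_prim_smult: "\<not> prim h \<Longrightarrow> \<exists>h1. h = smult p h1"
  using all_dvd_smult unfolding prim_def by blast

lemma prim_dvd: assumes "prim g" "h dvd g" shows "prim h"
proof (rule ccontr)
  assume "\<not> prim h"
  then obtain h1 where h1: "h = smult p h1" using not_prim_smult by blast
  obtain q where "g = h * q" using assms(2) by (auto simp: dvd_def)
  then have "g = smult p (h1 * q)" using h1 by simp
  then have "\<forall>i. p dvd coeff g i" by simp
  with assms(1) show False unfolding prim_def by blast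
qed

lemma prim_const_unit: assumes "prim g" "degree g = 0" shows "coeff g 0 dvd 1" "g = [:coeff g 0:]"
proof -
  show g: "g = [:coeff g 0:]" using assms(2) by (metis degree_0_id)
  obtain i where i: "\<not> p dvd coeff g i" using assms(1) unfolding prim_def by blast
  then have "i = 0" using assms(2) by (metis coeff_eq_0 dvd_0_right gr0I)
  then show "coeff g 0 dvd 1" using i not_p_unit by blast
qed

lemma content_decomp: assumes "g \<noteq> 0" shows "\<exists>k g'. g = smult (p^k) g' \<and> prim g'"
proof -
  have "\<forall>g. g \<noteq> 0 \<and> val p (lead_coeff g) \<le> n \<longrightarrow> (\<exists>k g'. g = smult (p^k) g' \<and> prim g')" for n
  proof (induction n)
    case 0
    show ?case
    proof (intro allI impI)
      fix g :: "'a poly" assume h: "g \<noteq> 0 \<and> val p (lead_coeff g) \<le> 0"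
      show "\<exists>k g'. g = smult (p^k) g' \<and> prim g'"
      proof (cases "prim g")
        case True then show ?thesis by (intro exI[of _ 0] exI[of _ g]) simp
      next
        case False
        then obtain h1 where h1: "g = smult p h1" using not_prim_smult by blast
        then have "p^1 dvd lead_coeff g" by simp
        moreover have "lead_coeff g \<noteq> 0" using h by simp
        ultimately have "1 \<le> val p (lead_coeff g)" using val_dvd_iff by blast
        with h show ?thesis by simp
      qed
    qed
  next
    case (Suc n)
    show ?case
    proof (intro allI impI)
      fix g :: "'a poly" assume h: "g \<noteq> 0 \<and> val p (lead_coeff g) \<le> Suc n"
      show "\<exists>k g'. g = smult (p^k) g' \<and> prim g'"
      proof (cases "prim g")
        case True then show ?thesis by (intro exI[of _ 0] exI[of _ g]) simp
      next
        case False
        then obtain h1 where h1: "g = smult p h1" using not_prim_smult by blast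
        then have l: "lead_coeff g = p * lead_coeff h1" and h1nz: "h1 \<noteq> 0" using h p_nz by auto
        then have "val p (lead_coeff g) = 1 + val p (lead_coeff h1)"
          using val_mult[of p "lead_coeff h1"] val_p p_nz by simp
        with h have "val p (lead_coeff h1) \<le> n" by simp
        then obtain k g' where "h1 = smult (p^k) g'" "prim g'" using Suc h1nz by blast
        then have "g = smult (p^Suc k) g' \<and> prim g'" using h1 by simp
        then show ?thesis by blast
      qed
    qed
  qed
  then show ?thesis using assms by blast
qed

end


lemma to_fract_power [simp]: "to_fract (x ^ n) = to_fract x ^ n"
  by (induction n) simp_all

lemma poly_fract_poly: "poly (fract_poly g) (to_fract a) = to_fract (poly g a)"
  by (induction g) (auto simp: map_poly_pCons)

context dvr begin

abbreviation "\<pi> \<equiv> to_fract p"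

lemma pi_nz: "\<pi> \<noteq> 0" using p_nz by simp

lemma unit_inv: "u dvd 1 \<Longrightarrow> \<exists>w. u * w = 1"
  by (auto simp: dvd_def)

lemma K_decomp: assumes "(x :: 'a fract) \<noteq> 0" shows "\<exists>u e. u dvd 1 \<and> x = to_fract u * \<pi> powi e"
proof -
  obtain a b where ab: "x = Fract a b" "b \<noteq> 0" by (cases x)
  then have a: "a \<noteq> 0" using assms by (auto simp: Fract_conv_to_fract)
  obtain u i where u: "u dvd 1" "a = u * p^i" using decomp[OF a] by blast
  obtain w j where w: "w dvd 1" "b = w * p^j" using decomp[OF ab(2)] by blast
  obtain w' where w': "w * w' = 1" using unit_inv[OF w(1)] by blast
  have w'u: "u * w' dvd 1" using u(1) w' by (metis dvd_triv_right mult_dvd_mono mult_1_right)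
  have "to_fract w * to_fract w' = 1" using w' by (metis to_fract_1 to_fract_mult)
  then have iw: "inverse (to_fract w) = to_fract w'" by (simp add: inverse_unique)
  have "x = to_fract a / to_fract b" using ab by (simp add: Fract_conv_to_fract)
  also have "\<dots> = to_fract u * \<pi>^i / (to_fract w * \<pi>^j)" using u w by simp
  also have "\<dots> = to_fract u * inverse (to_fract w) * (\<pi>^i / \<pi>^j)"
    by (simp add: divide_inverse inverse_mult_distrib mult_ac)
  also have "\<dots> = to_fract (u*w') * (\<pi>^i / \<pi>^j)" using iw by simp
  also have "\<pi>^i / \<pi>^j = \<pi> powi (int i - int j)" using pi_nz by (simp add: power_int_diff)
  finally show ?thesis using w'u by blast
qed

lemma clear_denom: "\<exists>d h. d \<noteq> 0 \<and> G = smult (inverse (to_fract d)) (fract_poly h)"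
proof (induction G)
  case 0 show ?case by (intro exI[of _ 1] exI[of _ 0]) simp
next
  case (pCons c H)
  obtain d h where dh: "d \<noteq> 0" "H = smult (inverse (to_fract d)) (fract_poly h)" using pCons by blast
  obtain a b where ab: "c = Fract a b" "b \<noteq> 0" by (cases c)
  have c: "c = to_fract a / to_fract b" using ab by (simp add: Fract_conv_to_fract)
  have "pCons c H = smult (inverse (to_fract (b*d))) (fract_poly (pCons (a*d) (smult b h)))"
    using dh ab by (simp add: map_poly_pCons c field_simps)
  moreover have "b*d \<noteq> 0" using dh ab by simp
  ultimately show ?case by blast
qed

lemma K_poly_decomp: assumes "G \<noteq> 0" shows "\<exists>x g. x \<noteq> 0 \<and> prim g \<and> G = smult x (fract_poly g)"
proof -
  obtain d h where dh: "d \<noteq> 0" "G = smult (inverse (to_fract d)) (fract_poly h)" using clear_denom by blast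
  then have "h \<noteq> 0" using assms by auto
  then obtain k g where "h = smult (p^k) g" "prim g" using content_decomp by blast
  then have "G = smult (inverse (to_fract d) * \<pi>^k) (fract_poly g)" using dh by simp
  moreover have "inverse (to_fract d) * \<pi>^k \<noteq> 0" using dh p_nz by simp
  ultimately show ?thesis using \<open>prim g\<close> by blast
qed

lemma K_poly_rep: assumes "G \<noteq> 0"
  shows "\<exists>u m g. u dvd 1 \<and> prim g \<and> G = smult (to_fract u * \<pi> powi (-m)) (fract_poly g)"
proof -
  obtain x g where xg: "x \<noteq> 0" "prim g" "G = smult x (fract_poly g)" using K_poly_decomp[OF assms] by blast
  obtain u e where "u dvd 1" "x = to_fract u * \<pi> powi e" using K_decomp[OF xg(1)] by blast
  then show ?thesis using xg by (intro exI[of _ u] exI[of _ "-e"] exI[of _ g]) simp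
qed

lemma integrality: assumes "smult x (fract_poly g) = fract_poly h" "prim g"
  shows "\<exists>r. x = to_fract r \<and> h = smult r g"
proof (cases "x = 0")
  case True then show ?thesis using assms by (intro exI[of _ 0]) simp
next
  case False
  obtain u e where ue: "u dvd 1" "x = to_fract u * \<pi> powi e" using K_decomp[OF False] by blast
  have "\<exists>r. x = to_fract r"
  proof (cases "e \<ge> 0")
    case True
    then have "x = to_fract (u * p^nat e)" using ue by (simp add: power_int_nonneg_exp)
    then show ?thesis by blast
  next
    case False
    define k where "k = nat (-e)"
    have k: "k > 0" "e = - int k" using False unfolding k_def by auto
    have "smult (to_fract u * inverse (\<pi>^k)) (fract_poly g) = fract_poly h" using assms(1) ue k
      by (simp add: power_int_minus)
    then have "smult (\<pi>^k) (smult (to_fract u * inverse (\<pi>^k)) (fract_poly g)) = smult (\<pi>^k) (fract_poly h)" by simp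
    then have "fract_poly (smult u g) = fract_poly (smult (p^k) h)" using pi_nz by (simp add: field_simps)
    then have eq: "smult u g = smult (p^k) h" by (simp only: fract_poly_eq_iff)
    have "p dvd coeff g i" for i
    proof -
      have "u * coeff g i = p^k * coeff h i" using arg_cong[OF eq, of "\<lambda>q. coeff q i"] by simp
      then have "p dvd u * coeff g i" using k by (metis dvd_mult2 dvd_power dvd_refl)
      then show ?thesis using p_prime unit_not_p[OF ue(1)] by blast
    qed
    with assms(2) show ?thesis unfolding prim_def by blast
  qed
  then obtain r where r: "x = to_fract r" by blast
  then have "fract_poly (smult r g) = fract_poly h" using assms(1) by simp
  then show ?thesis using r by (metis fract_poly_eq_iff)
qed

lemma units_to_fract: assumes "to_fract a * to_fract b = 1" shows "a dvd 1"
  using assms by (metis to_fract_1 to_fract_eq_iff to_fract_mult dvd_triv_left)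

lemma pi_powi_unit: assumes "\<pi> powi e = to_fract u" "u dvd 1" shows "e = 0"
proof (rule ccontr)
  assume "e \<noteq> 0"
  then consider "e > 0" | "e < 0" by linarith
  then show False
  proof cases
    case 1
    then have "to_fract (p ^ nat e) = to_fract u" using assms by (simp add: power_int_nonneg_exp)
    then have "p^nat e = u" by (simp only: to_fract_eq_iff)
    moreover have "p dvd p^nat e" using 1 by (simp add: dvd_power)
    ultimately have "p dvd u" by simp
    then show False using unit_not_p assms by blast
  next
    case 2
    obtain w where w: "u * w = 1" using unit_inv assms by blast
    have "\<pi> powi (-e) = inverse (to_fract u)" using assms by (simp add: power_int_minus)
    also have "\<dots> = to_fract w" using w by (metis inverse_unique to_fract_1 to_fract_mult)
    finally have "to_fract (p ^ nat (-e)) = to_fract w" using 2 by (simp add: power_int_nonneg_exp)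
    then have "p^nat (-e) = w" by (simp only: to_fract_eq_iff)
    moreover have "p dvd p^nat (-e)" using 2 by (simp add: dvd_power)
    ultimately have "p dvd w" by simp
    moreover have "w dvd 1" using w by (metis dvd_triv_right)
    ultimately show False using unit_not_p by blast
  qed
qed

lemma pi_powi_cancel:
  assumes "to_fract a * \<pi> powi e1 = to_fract b * \<pi> powi e2" "a dvd 1" "b dvd 1"
  shows "e1 = e2"
proof -
  have gen: "e1 = e2" if h: "to_fract a * \<pi> powi e1 = to_fract b * \<pi> powi e2" "a dvd 1" "e1 \<le> e2" for a b e1 e2
  proof -
    define k where "k = nat (e2 - e1)"
    have "\<pi> powi e2 = \<pi> powi e1 * \<pi> ^ k" unfolding k_def using that(3) pi_nz
      by (simp add: power_int_add[symmetric] power_int_nonneg_exp[symmetric])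
    then have "to_fract a * \<pi> powi e1 = (to_fract b * \<pi>^k) * \<pi> powi e1" using h(1) by (simp add: mult_ac)
    then have "to_fract a = to_fract b * \<pi>^k" using pi_nz by (simp add: power_int_not_zero)
    then have "a = b * p^k" by (metis to_fract_power to_fract_eq_iff to_fract_mult)
    have "k = 0"
    proof (rule ccontr)
      assume "k \<noteq> 0"
      then have "p dvd p^k" by (simp add: dvd_power)
      then have "p dvd a" using \<open>a = b * p^k\<close> by (simp add: dvd_mult)
      then show False using unit_not_p[OF h(2)] by blast
    qed
    then show ?thesis unfolding k_def using that(3) by simp
  qed
  show ?thesis
  proof (cases "e1 \<le> e2")
    case True then show ?thesis using gen assms by blast
  next
    case False then show ?thesis using gen[of b e2 a e1] assms by simp
  qed
qed

lemma rep_unique: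
  assumes "smult (to_fract u * \<pi> powi (-m)) (fract_poly g) = smult (to_fract u' * \<pi> powi (-m')) (fract_poly g')"
    "prim g" "prim g'" "u dvd 1" "u' dvd 1"
  shows "m = m' \<and> (\<exists>w. w dvd 1 \<and> g' = smult w g)"
proof -
  define c where "c = to_fract u * \<pi> powi (-m)"
  define c' where "c' = to_fract u' * \<pi> powi (-m')"
  have cnz: "c \<noteq> 0" "c' \<noteq> 0" using assms(4,5) pi_nz unfolding c_def c'_def by (auto simp: power_int_not_zero)
  have e: "smult c (fract_poly g) = smult c' (fract_poly g')" using assms(1) unfolding c_def c'_def .
  have "smult (c / c') (fract_poly g) = fract_poly g'"
    using arg_cong[OF e, of "smult (inverse c')"] cnz by (simp add: divide_inverse mult.commute)
  then obtain r where r: "c / c' = to_fract r" "g' = smult r g" using integrality assms(2) by blast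
  have "smult (c' / c) (fract_poly g') = fract_poly g"
    using arg_cong[OF e, of "smult (inverse c)"] cnz by (simp add: divide_inverse mult.commute)
  then obtain s where s: "c' / c = to_fract s" "g = smult s g'" using integrality assms(3) by blast
  have "(c / c') * (c' / c) = 1" using cnz by simp
  then have "to_fract (r * s) = to_fract 1" using r(1) s(1) by simp
  then have rs: "r * s = 1" by (simp only: to_fract_eq_iff)
  then have ru: "r dvd 1" by (metis dvd_triv_left)
  have "c = to_fract r * c'" using r(1) cnz by (simp add: field_simps)
  then have "to_fract u * \<pi> powi (-m) = to_fract (r * u') * \<pi> powi (-m')" unfolding c_def c'_def by (simp add: mult_ac)
  moreover have "r * u' dvd 1" using ru assms(5) by (metis mult_dvd_mono mult_1_right)
  ultimately have "-m = -m'" using pi_powi_cancel assms(4) by blast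
  then show ?thesis using r ru by auto
qed

lemma IntR_rep: assumes "u dvd 1"
  shows "smult (to_fract u * \<pi> powi (-m)) (fract_poly g) \<in> IntR \<longleftrightarrow> (\<forall>a. m \<le> 0 \<or> p^(nat m) dvd poly g a)"
proof -
  obtain w where w: "u * w = 1" using unit_inv assms by blast
  have key: "to_fract u * \<pi> powi (-m) * to_fract y \<in> range to_fract \<longleftrightarrow> m \<le> 0 \<or> p^(nat m) dvd y" for y
  proof (cases "m \<le> 0")
    case True
    then have "\<pi> powi (-m) = \<pi> ^ nat (-m)" by (simp add: power_int_nonneg_exp)
    then have "to_fract u * \<pi> powi (-m) * to_fract y = to_fract (u * p^nat (-m) * y)"
      by simp
    then have "to_fract u * \<pi> powi (-m) * to_fract y \<in> range to_fract" by (simp only: rangeI)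
    then show ?thesis using True by simp
  next
    case False
    define k where "k = nat m"
    have m: "m = int k" using False unfolding k_def by simp
    have pk: "\<pi> powi (-m) = inverse (\<pi>^k)" unfolding m by (simp add: power_int_minus)
    have pkn: "\<pi>^k \<noteq> 0" using pi_nz by simp
    have "to_fract u * \<pi> powi (-m) * to_fract y \<in> range to_fract \<longleftrightarrow> p^k dvd y"
    proof
      assume "to_fract u * \<pi> powi (-m) * to_fract y \<in> range to_fract"
      then obtain z where z: "to_fract u * \<pi> powi (-m) * to_fract y = to_fract z" by auto
      have "to_fract u * to_fract y = (to_fract u * inverse (\<pi>^k) * to_fract y) * \<pi>^k"
        using pkn by (simp add: mult_ac)
      also have "\<dots> = to_fract z * \<pi>^k" using z pk by simp
      finally have "to_fract (u * y) = to_fract (z * p^k)" by simp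
      then have "u * y = z * p^k" by (simp only: to_fract_eq_iff)
      then have "w * u * y = w * z * p^k" by (simp add: mult.assoc)
      then have "y = w * z * p^k" using w by (simp add: mult.commute)
      then show "p^k dvd y" by simp
    next
      assume "p^k dvd y"
      then obtain z where yz: "y = p^k * z" by (auto simp: dvd_def)
      have "to_fract u * \<pi> powi (-m) * to_fract y = to_fract u * (inverse (\<pi>^k) * \<pi>^k) * to_fract z"
        unfolding pk yz by (simp add: mult_ac)
      also have "\<dots> = to_fract (u*z)" using pkn by simp
      finally show "to_fract u * \<pi> powi (-m) * to_fract y \<in> range to_fract" by (simp only: rangeI)
    qed
    then show ?thesis using False k_def by simp
  qed
  show ?thesis unfolding IntR_def using key by (simp add: poly_fract_poly)
qed

end


lemma field_poly_bezout:
  fixes Q X :: "'b::field poly"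
  assumes deg: "degree Q \<ge> 1" and irr: "\<forall>A B. Q = A*B \<longrightarrow> degree A = 0 \<or> degree B = 0"
  shows "Q dvd X \<or> (\<exists>s t. s*Q + t*X = 1)"
proof (cases "X = 0")
  case True then show ?thesis by simp
next
  case False
  define S where "S = {d. d \<noteq> 0 \<and> (\<exists>s t. d = s*Q + t*X)}"
  have "X = 0*Q + 1*X" by simp
  then have "X \<in> S" unfolding S_def using False by blast
  then obtain d where d: "d \<in> S" and dmin: "\<forall>y. y \<in> S \<longrightarrow> degree d \<le> degree y"
    using ex_has_least_nat[of "\<lambda>d. d \<in> S" X degree] by blast
  obtain s t where st: "d = s*Q + t*X" "d \<noteq> 0" using d unfolding S_def by blast
  have mod0: "Y mod d = 0" if Y: "\<exists>a b. Y = a*Q + b*X" for Y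
  proof (rule ccontr)
    assume nz: "Y mod d \<noteq> 0"
    obtain a b where ab: "Y = a*Q + b*X" using Y by blast
    have "Y mod d = Y - (Y div d) * d" by (simp add: minus_div_mult_eq_mod)
    also have "\<dots> = (a - (Y div d)*s) * Q + (b - (Y div d)*t) * X" using ab st by (simp add: algebra_simps)
    finally have "Y mod d \<in> S" using nz unfolding S_def by blast
    then have "degree d \<le> degree (Y mod d)" using dmin by blast
    moreover have "degree (Y mod d) < degree d" using degree_mod_less[OF st(2), of Y] nz by simp
    ultimately show False by simp
  qed
  have "Q = 1*Q + 0*X" by simp
  then have dQ: "d dvd Q" using mod0[of Q] by (blast intro: mod_0_imp_dvd)
  have "X = 0*Q + 1*X" by simp
  then have dX: "d dvd X" using mod0[of X] by (blast intro: mod_0_imp_dvd)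
  obtain c where c: "Q = d * c" using dQ by (auto simp: dvd_def)
  have Qnz: "Q \<noteq> 0" using deg by auto
  from irr c have "degree d = 0 \<or> degree c = 0" by (simp only: )
  then show ?thesis
  proof
    assume "degree d = 0"
    then obtain e where e: "d = [:e:]" "e \<noteq> 0" using st(2) by (metis degree_eq_zeroE pCons_0_0)
    have "smult (inverse e) s * Q + smult (inverse e) t * X = smult (inverse e) d" unfolding st(1)
      by (simp add: smult_add_right)
    also have "\<dots> = 1" using e by simp
    finally show ?thesis by blast
  next
    assume "degree c = 0"
    then obtain e where e: "c = [:e:]" "e \<noteq> 0" using c Qnz by (metis degree_eq_zeroE mult_zero_right pCons_0_0)
    have "d = smult (inverse e) Q" using c e by simp
    then have "Q dvd d" by (simp add: dvd_smult)
    then show ?thesis using dX dvd_trans by blast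
  qed
qed

lemma field_poly_prime:
  fixes Q :: "'b::field poly"
  assumes deg: "degree Q \<ge> 1" and irr: "\<forall>A B. Q = A*B \<longrightarrow> degree A = 0 \<or> degree B = 0"
    and dvd: "Q dvd A * B"
  shows "Q dvd A \<or> Q dvd B"
proof (cases "Q dvd A")
  case False
  then obtain s t where st: "s*Q + t*A = 1" using field_poly_bezout[OF deg irr] by blast
  have "B = (s*B) * Q + t * (A*B)" using arg_cong[OF st, of "\<lambda>x. x * B"] by (simp add: algebra_simps)
  moreover have "Q dvd (s*B) * Q + t * (A*B)" using dvd by (simp add: dvd_add)
  ultimately show ?thesis by simp
qed simp

context dvr begin

lemma irred_prim_deg: assumes "irreducible q" "prim q" shows "degree q \<ge> 1"
proof (rule ccontr)
  assume "\<not> degree q \<ge> 1"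
  then have "degree q = 0" by simp
  then have "q = [:coeff q 0:]" "coeff q 0 dvd 1" using prim_const_unit assms(2) by auto
  then have "q dvd 1" by (metis is_unit_poly_iff)
  then show False using assms(1) unfolding irreducible_def by blast
qed

lemma fract_irred: assumes irr: "irreducible q" and pq: "prim q" and AB: "fract_poly q = A * B"
  shows "degree A = 0 \<or> degree B = 0"
proof -
  have "fract_poly q \<noteq> 0" using prim_nz[OF pq] by simp
  then have Anz: "A \<noteq> 0" and Bnz: "B \<noteq> 0" using AB by auto
  obtain x a where xa: "x \<noteq> 0" "prim a" "A = smult x (fract_poly a)" using K_poly_decomp[OF Anz] by blast
  obtain y b where yb: "y \<noteq> 0" "prim b" "B = smult y (fract_poly b)" using K_poly_decomp[OF Bnz] by blast
  have "smult (x*y) (fract_poly (a*b)) = fract_poly q" using AB xa yb by (simp add: mult_ac)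
  then obtain r where r: "x*y = to_fract r" "q = smult r (a*b)" using integrality prim_mult[OF xa(2) yb(2)] by blast
  then have q: "q = smult r a * b" by simp
  have rnz: "r \<noteq> 0" using r(1) xa(1) yb(1) by auto
  from irr q have "smult r a dvd 1 \<or> b dvd 1" unfolding irreducible_def by blast
  then have "degree (smult r a) = 0 \<or> degree b = 0" by (metis is_unit_poly_iff degree_pCons_0)
  then have "degree a = 0 \<or> degree b = 0" using rnz by (simp only: degree_smult_eq if_False)
  then show ?thesis using xa yb by (simp add: degree_map_poly)
qed

lemma gauss_dvd: assumes pq: "prim q" and d: "fract_poly q dvd fract_poly a" shows "q dvd a"
proof (cases "a = 0")
  case True then show ?thesis by simp
next
  case False
  obtain C where C: "fract_poly a = fract_poly q * C" using d by (auto simp: dvd_def)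
  then have "C \<noteq> 0" using False by auto
  then obtain x c where xc: "x \<noteq> 0" "prim c" "C = smult x (fract_poly c)" using K_poly_decomp by blast
  have "smult x (fract_poly (q*c)) = fract_poly a" using C xc by (simp add: mult_ac)
  then obtain r where "a = smult r (q*c)" using integrality prim_mult[OF pq xc(2)] by blast
  then have "a = q * smult r c" by simp
  then show ?thesis by (rule dvdI)
qed

lemma R_prime: assumes irr: "irreducible q" and pq: "prim q" and d: "q dvd a * b"
  shows "q dvd a \<or> q dvd b"
proof -
  have deg: "degree (fract_poly q) \<ge> 1" using irred_prim_deg[OF irr pq] by (simp add: degree_map_poly)
  have ir: "\<forall>A B. fract_poly q = A*B \<longrightarrow> degree A = 0 \<or> degree B = 0" using fract_irred[OF irr pq] by blast
  have "fract_poly q dvd fract_poly a * fract_poly b" using fract_poly_dvd[OF d] by simp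
  then have "fract_poly q dvd fract_poly a \<or> fract_poly q dvd fract_poly b"
    using field_poly_prime[OF deg ir] by blast
  then show ?thesis using gauss_dvd[OF pq] by blast
qed

end


locale fsetup = dvr +
  fixes f :: "'a poly" and P :: "'a poly set"
  assumes primf: "prim f" and degf: "degree f \<ge> 1" and Pdiv: "irreducible_divisor_set f P"
begin

lemma fk_prim: "prim (f^k)" using prim_power primf by blast

lemma dvd_fk_prim: "h dvd f^k \<Longrightarrow> prim h" using prim_dvd fk_prim by blast

lemma P_irr: "g \<in> P \<Longrightarrow> irreducible g" and P_dvd: "g \<in> P \<Longrightarrow> g dvd f"
  using Pdiv unfolding irreducible_divisor_set_def by auto

lemma P_prim: "g \<in> P \<Longrightarrow> prim g" using P_dvd prim_dvd primf by blast

lemma P_deg: "g \<in> P \<Longrightarrow> degree g \<ge> 1" using irred_prim_deg P_irr P_prim by blast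

lemma P_prime: "g \<in> P \<Longrightarrow> g dvd a * b \<Longrightarrow> g dvd a \<or> g dvd b"
  using R_prime P_irr P_prim by blast

lemma P_nunit: "g \<in> P \<Longrightarrow> \<not> g dvd 1" using P_irr unfolding irreducible_def by blast

lemma P_nz: "g \<in> P \<Longrightarrow> g \<noteq> 0" using P_prim prim_nz by blast

lemma P_prime_power: "g \<in> P \<Longrightarrow> g dvd a ^ k \<Longrightarrow> g dvd a"
proof (induction k)
  case 0 then show ?case using P_nunit by simp
next
  case (Suc k) then show ?case using P_prime[of g a "a^k"] by auto
qed

lemma assoc_irr: assumes "irreducible h" "g dvd h" "\<not> g dvd 1" shows "assoc_poly g h"
proof -
  obtain a where a: "h = g * a" using assms(2) by (auto simp: dvd_def)
  then have "a dvd 1" using assms unfolding irreducible_def by blast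
  then obtain b where "a * b = 1" by (auto simp: dvd_def)
  then have "h * b = g" using a by (simp add: mult.assoc)
  then have "g = h * b" by simp
  then show ?thesis unfolding assoc_poly_def using assms(2) by simp
qed

lemma P_eq: "g \<in> P \<Longrightarrow> h \<in> P \<Longrightarrow> g dvd h \<Longrightarrow> g = h"
  using assoc_irr P_irr P_nunit Pdiv unfolding irreducible_divisor_set_def by blast

lemma P_dvd_prod: assumes "g \<in> P" "S \<subseteq> P" "finite S" "g dvd (\<Prod>h\<in>S. h ^ e h)"
  shows "g \<in> S \<and> e g \<ge> 1"
  using assms(3,2,4)
proof (induction S rule: finite_induct)
  case empty then show ?case using P_nunit assms(1) by simp
next
  case (insert h S)
  then have "g dvd h ^ e h * (\<Prod>h\<in>S. h ^ e h)" by simp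
  then have "g dvd h ^ e h \<or> g dvd (\<Prod>h\<in>S. h ^ e h)" using P_prime assms(1) by blast
  then show ?case
  proof
    assume d: "g dvd h ^ e h"
    have "e h \<noteq> 0" using d P_nunit assms(1) by (metis power_0)
    moreover have "g = h" using P_prime_power[OF assms(1) d] P_eq assms(1) insert by blast
    ultimately show ?thesis by simp
  next
    assume "g dvd (\<Prod>h\<in>S. h ^ e h)"
    with insert show ?thesis by auto
  qed
qed

lemma finite_subset_P_dvd: "finite S \<Longrightarrow> S \<subseteq> P \<Longrightarrow> (\<Prod>h\<in>S. h) dvd f"
proof (induction S rule: finite_induct)
  case empty then show ?case by simp
next
  case (insert g S)
  then have gP: "g \<in> P" by simp
  obtain c where c: "f = (\<Prod>h\<in>S. h) * c" using insert by (auto simp: dvd_def)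
  have "g dvd (\<Prod>h\<in>S. h) * c" using P_dvd[OF gP] c by simp
  then have "g dvd (\<Prod>h\<in>S. h) \<or> g dvd c" using P_prime gP by blast
  then show ?case
  proof
    assume "g dvd (\<Prod>h\<in>S. h)"
    moreover have SP: "S \<subseteq> P" using insert(4) by simp
    ultimately have "g \<in> S" using P_dvd_prod[OF gP SP insert(1), of "\<lambda>_. 1"] by simp
    with insert(2) show ?thesis by simp
  next
    assume "g dvd c"
    then obtain c' where "c = g * c'" by (auto simp: dvd_def)
    have "(\<Prod>h\<in>insert g S. h) = g * (\<Prod>h\<in>S. h)" using insert(1,2) by simp
    then have "f = (\<Prod>h\<in>insert g S. h) * c'" unfolding c \<open>c = g * c'\<close> by (simp add: mult_ac)
    then show ?thesis by (rule dvdI)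
  qed
qed

lemma P_finite: "finite P"
proof (rule ccontr)
  assume "infinite P"
  then obtain S where S: "S \<subseteq> P" "finite S" "card S = degree f + 1"
    using infinite_arbitrarily_large by metis
  have d: "(\<Prod>h\<in>S. h) dvd f" using finite_subset_P_dvd S by blast
  have fnz: "f \<noteq> 0" using primf prim_nz by blast
  have nz: "(\<Prod>h\<in>S. h) \<noteq> 0" using S P_nz by (auto simp: prod_zero_iff)
  have "degree (\<Prod>h\<in>S. h) \<le> degree f" using d fnz by (rule dvd_imp_degree_le)
  moreover have "degree (\<Prod>h\<in>S. h) = (\<Sum>h\<in>S. degree h)" using S P_nz by (subst degree_prod_eq_sum_degree) auto
  moreover have "(\<Sum>h\<in>S. degree h) \<ge> (\<Sum>h\<in>S. 1)" using S P_deg by (intro sum_mono) auto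
  ultimately show False using S by simp
qed

lemma prod_P_dec: assumes "g \<in> P" "e g \<ge> 1"
  shows "(\<Prod>x\<in>P. x ^ e x) = g * (\<Prod>x\<in>P. x ^ (e(g := e g - 1)) x)"
proof -
  have "(\<Prod>x\<in>P. x ^ e x) = g ^ e g * (\<Prod>x\<in>P-{g}. x ^ e x)"
    using assms P_finite by (simp add: prod.remove)
  moreover have "(\<Prod>x\<in>P. x ^ (e(g := e g - 1)) x) = g ^ (e g - 1) * (\<Prod>x\<in>P-{g}. x ^ e x)"
    using assms P_finite by (simp add: prod.remove)
  moreover have "g ^ e g = g * g ^ (e g - 1)"
  proof -
    have "e g = Suc (e g - 1)" using assms(2) by simp
    then have "g ^ e g = g ^ Suc (e g - 1)" by (rule arg_cong)
    then show ?thesis by (simp only: power_Suc)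
  qed
  ultimately show ?thesis by (simp add: mult_ac)
qed

lemma const_dvd_fk: assumes "h dvd f^k" "degree h = 0" shows "\<exists>c. c dvd 1 \<and> h = [:c:]"
  using prim_const_unit[OF dvd_fk_prim[OF assms(1)] assms(2)] by blast

lemma irr_dvd_fk: assumes "irreducible q" "q dvd f^k" shows "\<exists>g\<in>P. assoc_poly q g"
proof -
  have pq: "prim q" using dvd_fk_prim assms(2) by blast
  have "q dvd f"
    using assms(2)
  proof (induction k)
    case 0 then show ?case using assms(1) unfolding irreducible_def by simp
  next
    case (Suc k) then show ?case using R_prime[OF assms(1) pq, of f "f^k"] by auto
  qed
  then show ?thesis using Pdiv assms(1) unfolding irreducible_divisor_set_def by blast
qed

lemma assoc_unit: assumes "assoc_poly q g" "g \<noteq> 0" shows "\<exists>w. w dvd 1 \<and> g = smult w q"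
proof -
  obtain a where a: "g = q * a" using assms unfolding assoc_poly_def by (auto simp: dvd_def)
  obtain b where b: "q = g * b" using assms unfolding assoc_poly_def by (auto simp: dvd_def)
  have "q * a = (g * b) * a" by (simp only: b)
  then have "g * 1 = g * (b * a)" using a by (simp add: mult.assoc)
  then have "b * a = 1" using assms(2) mult_left_cancel[of g 1 "b*a"] by simp
  then have "a dvd 1" using dvdI[of 1 a b] by (simp add: mult.commute)
  then obtain w where "a = [:w:]" "w dvd 1" by (auto simp: is_unit_poly_iff)
  then show ?thesis using a by (intro exI[of _ w]) simp
qed

lemma factor_exists: "h dvd f^k \<Longrightarrow> \<exists>w e. w dvd 1 \<and> h = smult w (\<Prod>g\<in>P. g ^ e g)"
proof (induction "degree h" arbitrary: h rule: less_induct)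
  case less
  show ?case
  proof (cases "degree h = 0")
    case True
    then obtain c where "c dvd 1" "h = [:c:]" using const_dvd_fk less(2) by blast
    then show ?thesis by (intro exI[of _ c] exI[of _ "\<lambda>_. 0"]) simp
  next
    case False
    define D where "D = {q. q dvd h \<and> degree q \<ge> 1}"
    have "h \<in> D" using False unfolding D_def by simp
    then obtain q where q: "q \<in> D" and qmin: "\<forall>y. y \<in> D \<longrightarrow> degree q \<le> degree y"
      using ex_has_least_nat[of "\<lambda>d. d \<in> D" h degree] by blast
    have qh: "q dvd h" and qdeg: "degree q \<ge> 1" using q unfolding D_def by auto
    have qf: "q dvd f^k" using qh less(2) by (rule dvd_trans)
    have "irreducible q"
      unfolding irreducible_def
    proof (intro conjI allI impI)
      show "q \<noteq> 0" using qdeg by auto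
      show "\<not> q dvd 1" using qdeg by (auto simp: is_unit_poly_iff)
    next
      fix a b assume ab: "q = a * b"
      have "q \<noteq> 0" using qdeg by auto
      then have nz: "a \<noteq> 0" "b \<noteq> 0" using ab by auto
      have dq: "degree q = degree a + degree b" using ab nz by (simp add: degree_mult_eq)
      have "a dvd q" "b dvd q" using ab by simp_all
      then have ah: "a dvd h" and bh: "b dvd h" using qh dvd_trans by blast+
      show "a dvd 1 \<or> b dvd 1"
      proof (cases "degree a = 0")
        case True
        have "a dvd f^k" using ah less(2) by (rule dvd_trans)
        then obtain c where "c dvd 1" "a = [:c:]" using const_dvd_fk True by blast
        then have "a dvd 1" using is_unit_poly_iff by blast
        then show ?thesis by blast
      next
        case Fa: False
        show ?thesis
        proof (cases "degree b = 0")
          case True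
          have "b dvd f^k" using bh less(2) by (rule dvd_trans)
          then obtain c where "c dvd 1" "b = [:c:]" using const_dvd_fk True by blast
          then have "b dvd 1" using is_unit_poly_iff by blast
          then show ?thesis by blast
        next
          case False
          then have "a \<in> D" using ah Fa unfolding D_def by simp
          then have "degree q \<le> degree a" using qmin by blast
          with dq False show ?thesis by simp
        qed
      qed
    qed
    then obtain g where gP: "g \<in> P" and qg: "assoc_poly q g" using irr_dvd_fk qf by blast
    have "g dvd q" using qg unfolding assoc_poly_def by blast
    then have "g dvd h" using qh dvd_trans by blast
    then obtain h' where h': "h = g * h'" by (auto simp: dvd_def)
    have hnz: "h \<noteq> 0" using False by auto
    then have h'nz: "h' \<noteq> 0" using h' by auto
    have "degree h = degree g + degree h'" using h' hnz h'nz P_nz[OF gP] by (simp add: degree_mult_eq)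
    then have "degree h' < degree h" using P_deg[OF gP] by simp
    moreover have "h' dvd f^k" using h' less(2) by (metis dvd_mult_right)
    ultimately obtain w e where we: "w dvd 1" "h' = smult w (\<Prod>g\<in>P. g ^ e g)" using less(1) by blast
    define e' where "e' = e(g := e g + 1)"
    have "(\<Prod>x\<in>P. x ^ e' x) = g * (\<Prod>x\<in>P. x ^ (e'(g := e' g - 1)) x)"
      using prod_P_dec[OF gP, of e'] unfolding e'_def by simp
    also have "e'(g := e' g - 1) = e" unfolding e'_def by auto
    finally have "h = smult w (\<Prod>x\<in>P. x ^ e' x)" using h' we by simp
    then show ?thesis using we by blast
  qed
qed

lemma factor_unique:
  assumes "smult w (\<Prod>g\<in>P. g ^ e g) = smult w' (\<Prod>g\<in>P. g ^ e' g)" "w dvd 1" "w' dvd 1"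
  shows "\<forall>g\<in>P. e g = e' g"
  using assms
proof (induction "\<Sum>g\<in>P. e g" arbitrary: e e' w w' rule: less_induct)
  case less
  have wnz: "w \<noteq> 0" "w' \<noteq> 0" using less by auto
  show ?case
  proof (cases "\<exists>g\<in>P. e g \<ge> 1")
    case True
    then obtain g where gP: "g \<in> P" and eg: "e g \<ge> 1" by blast
    have "g dvd smult w (\<Prod>g\<in>P. g ^ e g)" using prod_P_dec[of g e, OF gP eg] by (simp add: dvd_smult)
    then have "g dvd smult w' (\<Prod>g\<in>P. g ^ e' g)" using less(2) by simp
    moreover obtain w2 where w2: "w' * w2 = 1" using less(4) by (auto simp: dvd_def)
    ultimately have "g dvd smult w2 (smult w' (\<Prod>g\<in>P. g ^ e' g))" using dvd_smult by blast
    then have "g dvd (\<Prod>g\<in>P. g ^ e' g)" using w2 by (simp add: mult.commute)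
    then have e'g: "e' g \<ge> 1" using P_dvd_prod[OF gP _ P_finite] by blast
    define d where "d = e(g := e g - 1)"
    define d' where "d' = e'(g := e' g - 1)"
    have "g * smult w (\<Prod>x\<in>P. x ^ d x) = g * smult w' (\<Prod>x\<in>P. x ^ d' x)"
      using less(2) prod_P_dec[of g e, OF gP eg] prod_P_dec[of g e', OF gP e'g] unfolding d_def d'_def by (simp add: mult_ac)
    then have eqd: "smult w (\<Prod>x\<in>P. x ^ d x) = smult w' (\<Prod>x\<in>P. x ^ d' x)" using P_nz[OF gP] mult_left_cancel by blast
    have "(\<Sum>x\<in>P. d x) < (\<Sum>x\<in>P. e x)"
    proof -
      have "(\<Sum>x\<in>P. e x) = e g + (\<Sum>x\<in>P-{g}. e x)" using gP P_finite by (simp add: sum.remove)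
      moreover have "(\<Sum>x\<in>P. d x) = (e g - 1) + (\<Sum>x\<in>P-{g}. e x)" using gP P_finite unfolding d_def
        by (simp add: sum.remove)
      ultimately show ?thesis using eg by simp
    qed
    then have "\<forall>x\<in>P. d x = d' x" using less(1)[OF _ eqd less(3,4)] by blast
    then show ?thesis
    proof (intro ballI)
      fix x assume xP: "x \<in> P" and dd: "\<forall>x\<in>P. d x = d' x"
      show "e x = e' x"
      proof (cases "x = g")
        case True
        then have "e g - 1 = e' g - 1" using dd gP unfolding d_def d'_def by force
        then show ?thesis using True eg e'g by simp
      next
        case False
        then show ?thesis using dd xP unfolding d_def d'_def by force
      qed
    qed
  next
    case False
    then have e0: "\<forall>g\<in>P. e g = 0" by auto
    then have "(\<Prod>g\<in>P. g ^ e g) = 1" by simp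
    show ?thesis
    proof (rule ccontr)
      assume "\<not> (\<forall>g\<in>P. e g = e' g)"
      then obtain g where gP: "g \<in> P" and eg: "e' g \<ge> 1" using e0 by force
      have "g dvd smult w' (\<Prod>g\<in>P. g ^ e' g)" using prod_P_dec[of g e', OF gP eg] by (simp add: dvd_smult)
      then have "g dvd [:w:]" using less(2) e0 by simp
      moreover have "[:w:] dvd 1" using less(3) by (simp add: is_unit_poly_iff)
      ultimately show False using P_nunit[OF gP] dvd_trans by blast
    qed
  qed
qed

end


lemma sum_list_le_eq:
  fixes F G :: "'b \<Rightarrow> int"
  assumes "\<forall>x\<in>set xs. F x \<le> G x" "sum_list (map F xs) = sum_list (map G xs)"
  shows "\<forall>x\<in>set xs. F x = G x"
  using assms
proof (induction xs)
  case (Cons a xs)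
  have h1: "F a \<le> G a" using Cons(2) by simp
  have h2: "sum_list (map F xs) \<le> sum_list (map G xs)" using Cons(2) by (intro sum_list_mono) auto
  have h3: "F a + sum_list (map F xs) = G a + sum_list (map G xs)" using Cons(3) by simp
  have e1: "F a = G a" using h1 h2 h3 by linarith
  have e2: "sum_list (map F xs) = sum_list (map G xs)" using h1 h2 h3 by linarith
  have "\<forall>x\<in>set xs. F x \<le> G x" using Cons(2) by simp
  then have "\<forall>x\<in>set xs. F x = G x" using Cons.IH e2 by blast
  then show ?case using e1 by simp
qed simp

lemma int_sum_list: "int (sum_list (map g xs)) = sum_list (map (\<lambda>x. int (g x)) xs)"
  by (induction xs) auto

locale mainl = fsetup +
  assumes n1: "vd p f \<ge> 1"
begin

abbreviation "n \<equiv> vd p f"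
abbreviation "W \<equiv> W_set p f"
definition "FF = smult (inverse (\<pi> ^ n)) (fract_poly f)"

lemma f_nz: "f \<noteq> 0" using primf prim_nz by blast

lemma exists_nonroot: "\<exists>a. poly f a \<noteq> 0"
proof (rule ccontr)
  assume "\<not> (\<exists>a. poly f a \<noteq> 0)"
  then have "{x. poly f x = 0} = UNIV" by auto
  then show False using poly_roots_finite[OF f_nz] R_infinite by simp
qed

lemma vd_le: "poly f a \<noteq> 0 \<Longrightarrow> n \<le> val p (poly f a)"
  unfolding vd_def by (rule Least_le) blast

lemma W_ne: "\<exists>b. b \<in> W"
proof -
  obtain a where a: "poly f a \<noteq> 0" using exists_nonroot by blast
  have "\<exists>k a. poly f a \<noteq> 0 \<and> val p (poly f a) = k" using a by blast
  then have "\<exists>a. poly f a \<noteq> 0 \<and> val p (poly f a) = n" unfolding vd_def by (rule LeastI_ex)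
  then show ?thesis unfolding W_set_def by blast
qed

definition "b0 = (SOME b. b \<in> W)"
lemma b0W: "b0 \<in> W" unfolding b0_def using W_ne by (rule someI_ex)

lemma W_nz: "b \<in> W \<Longrightarrow> poly f b \<noteq> 0" and W_val: "b \<in> W \<Longrightarrow> val p (poly f b) = n"
  unfolding W_set_def by auto

lemma FF_nz: "FF \<noteq> 0" unfolding FF_def using f_nz pi_nz by simp


lemma FF_rep: "FF = smult (to_fract 1 * \<pi> powi (- int n)) (fract_poly f)"
  unfolding FF_def by (simp add: power_int_minus)

lemma FF_pow_rep: "FF ^ k = smult (to_fract 1 * \<pi> powi (- int (k*n))) (fract_poly (f^k))"
proof (induction k)
  case 0 then show ?case by simp
next
  case (Suc k)
  have "FF ^ Suc k = FF * FF^k" by simp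
  also have "\<dots> = smult (to_fract 1 * \<pi> powi (- int n)) (fract_poly f) * smult (to_fract 1 * \<pi> powi (- int (k*n))) (fract_poly (f^k))"
    by (subst Suc.IH) (simp only: FF_rep)
  also have "\<dots> = smult (\<pi> powi (- int n) * \<pi> powi (- int (k*n))) (fract_poly (f * f^k))"
    by (simp add: mult_ac)
  also have "\<pi> powi (- int n) * \<pi> powi (- int (k*n)) = \<pi> powi (- int (Suc k * n))"
    using pi_nz by (simp add: power_int_add[symmetric] algebra_simps)
  finally show ?case by simp
qed

lemma f_dvd_pn: "p^n dvd poly f a"
proof (cases "poly f a = 0")
  case False then show ?thesis using vd_le val_dvd_iff by blast
qed simp

lemma FF_IntR: "FF \<in> IntR"
  unfolding FF_rep by (subst IntR_rep) (auto simp: f_dvd_pn)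

lemma IntR_mult: assumes "A \<in> IntR" "B \<in> IntR" shows "A * B \<in> IntR"
proof (unfold IntR_def, intro CollectI allI)
  fix a
  obtain x where x: "poly A (to_fract a) = to_fract x" using assms(1) unfolding IntR_def by blast
  obtain y where y: "poly B (to_fract a) = to_fract y" using assms(2) unfolding IntR_def by blast
  have "poly (A * B) (to_fract a) = to_fract (x * y)" using x y by simp
  then show "poly (A * B) (to_fract a) \<in> range to_fract" by (simp only: rangeI)
qed

lemma IntR_const: "[:to_fract c:] \<in> IntR"
  unfolding IntR_def by auto

lemma IntR_unit_const: "v dvd 1 \<Longrightarrow> IntR_unit [:to_fract v:]"
proof -
  assume "v dvd 1"
  then obtain w where w: "v * w = 1" using unit_inv by blast
  have c: "to_fract v * to_fract w = 1" using arg_cong[OF w, of to_fract] by simp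
  have "[:to_fract v:] * [:to_fract w:] = [:to_fract v * to_fract w:]" by simp
  also have "\<dots> = 1" using c by (simp add: one_pCons)
  finally have "[:to_fract v:] * [:to_fract w:] = 1" .
  then show ?thesis unfolding IntR_unit_def using IntR_const by blast
qed

lemma IntR_unit_deg: "IntR_unit G \<Longrightarrow> degree G = 0"
proof -
  assume "IntR_unit G"
  then obtain H where "G * H = 1" unfolding IntR_unit_def by blast
  then have "G dvd 1" using dvdI[of 1 G H] by simp
  then show ?thesis by (auto simp: is_unit_poly_iff)
qed

lemma IntR_unit_form: assumes "IntR_unit G" shows "\<exists>v. v dvd 1 \<and> G = [:to_fract v:]"
proof -
  obtain H where H: "H \<in> IntR" "G * H = 1" "G \<in> IntR" using assms unfolding IntR_unit_def by blast
  have "G dvd 1" "H dvd 1" using dvdI[of 1 G H] dvdI[of 1 H G] H(2) by (simp_all add: mult.commute)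
  then obtain c d where cd: "G = [:c:]" "H = [:d:]" by (auto simp: is_unit_poly_iff)
  have "poly G (to_fract 0) \<in> range to_fract" using H(3) unfolding IntR_def by blast
  then obtain v where v: "c = to_fract v" using cd by auto
  have "poly H (to_fract 0) \<in> range to_fract" using H(1) unfolding IntR_def by blast
  then obtain w where w: "d = to_fract w" using cd by auto
  have "[:c * d:] = 1" using H(2) cd by (simp add: mult.commute)
  then have "c * d = 1" by (simp add: one_pCons)
  then have "to_fract (v * w) = to_fract 1" using v w by simp
  then have "v * w = 1" by (simp only: to_fract_eq_iff)
  then have "v dvd 1" using dvdI[of 1 v w] by simp
  then show ?thesis using cd v by blast
qed

lemma FF_deg: "degree (FF ^ k) = k * degree f"
proof -
  have "degree FF = degree f" unfolding FF_def using pi_nz by (simp add: degree_map_poly)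
  then show ?thesis using FF_nz by (simp add: degree_power_eq)
qed

definition "rep q = (SOME (u, m, g). u dvd 1 \<and> prim g \<and> q = smult (to_fract u * \<pi> powi (-m)) (fract_poly g))"
definition "ru q = fst (rep q)"
definition "rm q = fst (snd (rep q))"
definition "rg q = snd (snd (rep q))"

lemma rep_spec: assumes "q \<noteq> 0"
  shows "ru q dvd 1" "prim (rg q)" "q = smult (to_fract (ru q) * \<pi> powi (- rm q)) (fract_poly (rg q))"
proof -
  have "\<exists>x. (\<lambda>(u, m, g). u dvd 1 \<and> prim g \<and> q = smult (to_fract u * \<pi> powi (-m)) (fract_poly g)) x"
    using K_poly_rep[OF assms] by auto
  then have "(\<lambda>(u, m, g). u dvd 1 \<and> prim g \<and> q = smult (to_fract u * \<pi> powi (-m)) (fract_poly g)) (rep q)"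
    unfolding rep_def by (rule someI_ex)
  then show "ru q dvd 1" "prim (rg q)" "q = smult (to_fract (ru q) * \<pi> powi (- rm q)) (fract_poly (rg q))"
    unfolding ru_def rm_def rg_def by (auto simp: case_prod_beta)
qed

lemma prod_list_rep: assumes "\<forall>q\<in>set qs. q \<noteq> 0"
  shows "prod_list qs = smult (to_fract (prod_list (map ru qs)) * \<pi> powi (- sum_list (map rm qs)))
           (fract_poly (prod_list (map rg qs)))"
  using assms
proof (induction qs)
  case Nil then show ?case by simp
next
  case (Cons q qs)
  have "prod_list (q # qs) = q * prod_list qs" by simp
  also have "\<dots> = smult (to_fract (ru q) * \<pi> powi (- rm q)) (fract_poly (rg q)) *
     smult (to_fract (prod_list (map ru qs)) * \<pi> powi (- sum_list (map rm qs))) (fract_poly (prod_list (map rg qs)))"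
    using Cons rep_spec(3)[of q] by simp
  also have "\<dots> = smult (to_fract (ru q * prod_list (map ru qs)) * (\<pi> powi (- rm q) * \<pi> powi (- sum_list (map rm qs))))
     (fract_poly (rg q * prod_list (map rg qs)))" by (simp add: mult_ac)
  also have "\<pi> powi (- rm q) * \<pi> powi (- sum_list (map rm qs)) = \<pi> powi (- (rm q + sum_list (map rm qs)))"
    using pi_nz by (simp add: power_int_add[symmetric])
  finally show ?case by simp
qed

lemma unit_prod_list: "(\<forall>x\<in>set xs. x dvd (1::'b::comm_semiring_1)) \<Longrightarrow> prod_list xs dvd 1"
  by (induction xs) (auto intro: mult_dvd_mono[of _ 1 _ 1, simplified])

lemma IntR_rm_le: assumes "q \<in> IntR" "q \<noteq> 0" "poly (rg q) b \<noteq> 0"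
  shows "rm q \<le> int (val p (poly (rg q) b))"
proof -
  have "\<forall>a. rm q \<le> 0 \<or> p ^ nat (rm q) dvd poly (rg q) a"
    using assms(1) rep_spec[OF assms(2)] IntR_rep by metis
  then have "rm q \<le> 0 \<or> p ^ nat (rm q) dvd poly (rg q) b" by blast
  then show ?thesis using val_dvd_iff[OF assms(3)] by auto
qed

lemma structural:
  assumes qs: "\<forall>q\<in>set qs. q \<in> IntR" and pr: "prod_list qs = FF ^ k"
  shows "sum_list (map rm qs) = int (k * n)"
    and "\<exists>w. w dvd 1 \<and> prod_list (map rg qs) = smult w (f^k)"
    and "\<forall>q\<in>set qs. rg q dvd f^k"
    and "\<forall>q\<in>set qs. \<forall>b\<in>W. poly (rg q) b \<noteq> 0 \<and> rm q = int (val p (poly (rg q) b))"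
    and "\<forall>q\<in>set qs. q \<noteq> 0"
proof -
  have "FF ^ k \<noteq> 0" using FF_nz by simp
  have "0 \<notin> set qs"
  proof
    assume "0 \<in> set qs"
    then have "prod_list qs = 0" by (simp add: prod_list_zero_iff)
    with pr \<open>FF ^ k \<noteq> 0\<close> show False by simp
  qed
  then show nz: "\<forall>q\<in>set qs. q \<noteq> 0" by auto
  have pru: "prod_list (map ru qs) dvd 1" using nz rep_spec(1) by (intro unit_prod_list) auto
  have prp: "prim (prod_list (map rg qs))" using nz rep_spec(2) by (intro prim_prod_list) auto
  have "smult (to_fract (prod_list (map ru qs)) * \<pi> powi (- sum_list (map rm qs))) (fract_poly (prod_list (map rg qs)))
      = smult (to_fract 1 * \<pi> powi (- int (k*n))) (fract_poly (f^k))"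
    using prod_list_rep[OF nz] pr FF_pow_rep by simp
  from rep_unique[OF this prp fk_prim pru one_dvd]
  obtain w' where w': "sum_list (map rm qs) = int (k*n)" "w' dvd 1" "f^k = smult w' (prod_list (map rg qs))" by blast
  show "sum_list (map rm qs) = int (k * n)" using w' by simp
  obtain w where w: "w' * w = 1" using w'(2) unit_inv by blast
  have prw: "prod_list (map rg qs) = smult w (f^k)" using w'(3) w by (simp add: mult.commute)
  moreover have "w dvd 1" using w by (metis dvdI mult.commute)
  ultimately show "\<exists>w. w dvd 1 \<and> prod_list (map rg qs) = smult w (f^k)" by blast
  have "prod_list (map rg qs) dvd f^k" unfolding w'(3) by (rule dvd_smult) simp
  then show "\<forall>q\<in>set qs. rg q dvd f^k"
  proof (intro ballI)
    fix q assume "prod_list (map rg qs) dvd f^k" "q \<in> set qs"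
    then have "rg q \<in> set (map rg qs)" by simp
    then have "rg q dvd prod_list (map rg qs)" by (rule prod_list_dvd)
    then show "rg q dvd f^k" using \<open>prod_list (map rg qs) dvd f^k\<close> by (rule dvd_trans)
  qed
  have "\<forall>b\<in>W. \<forall>q\<in>set qs. poly (rg q) b \<noteq> 0 \<and> rm q = int (val p (poly (rg q) b))"
  proof (rule ballI)
    fix b assume bW: "b \<in> W"
    have "poly (prod_list (map rg qs)) b = w * poly f b ^ k" using prw by (simp add: poly_power)
    moreover have "w \<noteq> 0" using w by auto
    ultimately have pnz: "poly (prod_list (map rg qs)) b \<noteq> 0" using W_nz[OF bW] by simp
    have pl: "poly (prod_list (map rg qs)) b = prod_list (map (\<lambda>q. poly (rg q) b) qs)"
      by (induction qs) auto
    have gnz: "\<forall>q\<in>set qs. poly (rg q) b \<noteq> 0" using pnz unfolding pl by (auto simp: prod_list_zero_iff)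
    have "val p (w * poly f b ^ k) = val p w + val p (poly f b ^ k)"
      using \<open>w \<noteq> 0\<close> W_nz[OF bW] by (intro val_mult) auto
    then have "val p (poly (prod_list (map rg qs)) b) = k * n"
      using \<open>poly (prod_list (map rg qs)) b = w * poly f b ^ k\<close> \<open>w dvd 1\<close> W_nz[OF bW] W_val[OF bW]
      by (simp add: val_unit val_power)
    moreover have "val p (poly (prod_list (map rg qs)) b) = sum_list (map (\<lambda>q. val p (poly (rg q) b)) qs)"
      unfolding pl using gnz by (subst val_prod_list) (auto simp: comp_def)
    ultimately have "sum_list (map (\<lambda>q. int (val p (poly (rg q) b))) qs) = int (k*n)"
      by (simp add: int_sum_list[symmetric] comp_def)
    moreover have "\<forall>q\<in>set qs. rm q \<le> int (val p (poly (rg q) b))" using IntR_rm_le qs nz gnz by blast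
    ultimately have "\<forall>q\<in>set qs. rm q = int (val p (poly (rg q) b))"
      using sum_list_le_eq[of qs rm] w' by simp
    then show "\<forall>q\<in>set qs. poly (rg q) b \<noteq> 0 \<and> rm q = int (val p (poly (rg q) b))" using gnz by blast
  qed
  then show "\<forall>q\<in>set qs. \<forall>b\<in>W. poly (rg q) b \<noteq> 0 \<and> rm q = int (val p (poly (rg q) b))" by blast
qed

end


context mainl begin

lemma deg_rg: "q \<noteq> 0 \<Longrightarrow> degree q = degree (rg q)"
proof -
  assume q: "q \<noteq> 0"
  have "to_fract (ru q) * \<pi> powi (- rm q) \<noteq> 0" using rep_spec(1)[OF q] pi_nz by (auto simp: power_int_not_zero)
  then show ?thesis using rep_spec(3)[OF q] by (metis degree_map_poly degree_smult_eq to_fract_eq_0_iff)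
qed

lemma zero_measure_unit:
  assumes "q \<noteq> 0" "degree q = 0" "rm q = 0" shows "IntR_unit q"
proof -
  have "degree (rg q) = 0" using deg_rg assms by simp
  then have c: "coeff (rg q) 0 dvd 1" "rg q = [:coeff (rg q) 0:]" using prim_const_unit rep_spec(2)[OF assms(1)] by auto
  have "q = smult (to_fract (ru q)) (fract_poly [:coeff (rg q) 0:])"
    using rep_spec(3)[OF assms(1)] assms(3) c(2) by simp
  also have "\<dots> = [:to_fract (ru q * coeff (rg q) 0):]" by (simp add: map_poly_pCons)
  finally show ?thesis using IntR_unit_const rep_spec(1)[OF assms(1)] c(1) by (metis mult_dvd_mono mult_1_right)
qed

lemma rm_nonneg: assumes "\<forall>q\<in>set qs. q \<in> IntR" "prod_list qs = FF ^ k" "q \<in> set qs" shows "rm q \<ge> 0"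
  using structural(4)[OF assms(1,2)] assms(3) b0W by fastforce

lemma atomic:
  assumes "G \<in> IntR" "H \<in> IntR" "G * H = FF ^ K" "\<not> IntR_unit G"
  shows "\<exists>qs. (\<forall>q\<in>set qs. IntR_irreducible q) \<and> prod_list qs = G"
  using assms
proof (induction "degree G + nat (rm G)" arbitrary: G H rule: less_induct)
  case less
  show ?case
  proof (cases "IntR_irreducible G")
    case True
    then show ?thesis by (intro exI[of _ "[G]"]) simp
  next
    case False
    have "FF ^ K \<noteq> 0" using FF_nz by simp
    then have Gnz: "G \<noteq> 0" using less(4) by auto
    then obtain G1 G2 where G12: "G1 \<in> IntR" "G2 \<in> IntR" "G = G1 * G2" "\<not> IntR_unit G1" "\<not> IntR_unit G2"
      using False less(2,5) unfolding IntR_irreducible_def by blast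
    have l3: "\<forall>q\<in>set [G1, G2, H]. q \<in> IntR" using G12 less(3) by simp
    have p3: "prod_list [G1, G2, H] = FF ^ K" using G12 less(4) by (simp add: mult_ac)
    have l2: "\<forall>q\<in>set [G, H]. q \<in> IntR" using less(2,3) by simp
    have p2: "prod_list [G, H] = FF ^ K" using less(4) by simp
    have s3: "rm G1 + (rm G2 + rm H) = int (K * n)" using structural(1)[OF l3 p3] by simp
    have s2: "rm G + rm H = int (K * n)" using structural(1)[OF l2 p2] by simp
    have nn: "rm G1 \<ge> 0" "rm G2 \<ge> 0" using rm_nonneg[OF l3 p3] by auto
    have rmG: "rm G = rm G1 + rm G2" using s2 s3 by simp
    have nz12: "G1 \<noteq> 0" "G2 \<noteq> 0" using Gnz G12(3) by auto
    have dG: "degree G = degree G1 + degree G2" using G12(3) nz12 by (simp add: degree_mult_eq)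
    have m1: "degree G1 + nat (rm G1) \<ge> 1"
    proof (rule ccontr)
      assume "\<not> ?thesis"
      then have "degree G1 = 0" "rm G1 = 0" using nn by auto
      then show False using zero_measure_unit nz12 G12(4) by blast
    qed
    have m2: "degree G2 + nat (rm G2) \<ge> 1"
    proof (rule ccontr)
      assume "\<not> ?thesis"
      then have "degree G2 = 0" "rm G2 = 0" using nn by auto
      then show False using zero_measure_unit nz12 G12(5) by blast
    qed
    have meq: "degree G + nat (rm G) = (degree G1 + nat (rm G1)) + (degree G2 + nat (rm G2))"
      using dG rmG nn by simp
    have "G1 * (G2 * H) = FF ^ K" using G12(3) less(4) by (simp add: mult_ac)
    moreover have "G2 * H \<in> IntR" using IntR_mult G12(2) less(3) by blast
    moreover have "degree G1 + nat (rm G1) < degree G + nat (rm G)" using meq m2 by linarith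
    ultimately obtain qs1 where qs1: "\<forall>q\<in>set qs1. IntR_irreducible q" "prod_list qs1 = G1"
      using less(1) G12(1,4) by blast
    have "G2 * (G1 * H) = FF ^ K" using G12(3) less(4) by (simp add: mult_ac)
    moreover have "G1 * H \<in> IntR" using IntR_mult G12(1) less(3) by blast
    moreover have "degree G2 + nat (rm G2) < degree G + nat (rm G)" using meq m1 by linarith
    ultimately obtain qs2 where qs2: "\<forall>q\<in>set qs2. IntR_irreducible q" "prod_list qs2 = G2"
      using less(1) G12(2,5) by blast
    have "prod_list (qs1 @ qs2) = G" using qs1 qs2 G12(3) by simp
    then show ?thesis using qs1 qs2 by (intro exI[of _ "qs1 @ qs2"]) auto
  qed
qed

end


lemma nt_lemma:
  fixes n M :: nat and a e :: "'x \<Rightarrow> nat"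
  assumes n: "n \<ge> 1" and eq: "\<forall>x\<in>A. e x * n = a x * M" and nd: "\<not> n dvd M"
  shows "\<exists>d\<ge>2. \<forall>x\<in>A. d dvd a x"
proof -
  define g where "g = gcd n M"
  define n' where "n' = n div g"
  define M' where "M' = M div g"
  have gpos: "g > 0" unfolding g_def using n by simp
  have nn: "n = n' * g" unfolding n'_def g_def by simp
  have MM: "M = M' * g" unfolding M'_def g_def by simp
  have cop: "coprime n' M'" unfolding n'_def M'_def g_def using n by (intro div_gcd_coprime) auto
  have "n' \<noteq> 1" using nd nn MM by auto
  moreover have "n' \<noteq> 0" using nn n by auto
  ultimately have n2: "n' \<ge> 2" by simp
  have "\<forall>x\<in>A. n' dvd a x"
  proof
    fix x assume xA: "x \<in> A"
    have "e x * n = a x * M" using eq xA by blast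
    then have "(e x * n') * g = (a x * M') * g" unfolding nn MM by (simp only: mult.assoc)
    then have "e x * n' = a x * M'" using gpos by simp
    then have "n' dvd a x * M'" by (metis dvd_triv_right)
    then show "n' dvd a x" using coprime_dvd_mult_left_iff[OF cop] by blast
  qed
  then show ?thesis using n2 by blast
qed

context mainl begin

lemma dvd_smult_unit: assumes "g dvd smult w X" "w dvd 1" shows "g dvd X"
proof -
  obtain w2 where w2: "w * w2 = 1" using assms(2) unit_inv by blast
  have "g dvd smult w2 (smult w X)" using assms(1) dvd_smult by blast
  then show ?thesis using w2 by (simp add: mult.commute)
qed

lemma f_fact: "\<exists>w0 a. w0 dvd 1 \<and> f = smult w0 (\<Prod>g\<in>P. g ^ a g) \<and> (\<forall>g\<in>P. a g \<ge> 1)"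
proof -
  have "f dvd f^1" by simp
  then obtain w0 a where wa: "w0 dvd 1" "f = smult w0 (\<Prod>g\<in>P. g ^ a g)" using factor_exists by blast
  have "\<forall>g\<in>P. a g \<ge> 1"
  proof
    fix g assume gP: "g \<in> P"
    have "g dvd smult w0 (\<Prod>g\<in>P. g ^ a g)" using P_dvd[OF gP] wa(2) by simp
    then have "g dvd (\<Prod>g\<in>P. g ^ a g)" using dvd_smult_unit wa(1) by blast
    then show "a g \<ge> 1" using P_dvd_prod[OF gP _ P_finite] by blast
  qed
  then show ?thesis using wa by blast
qed

definition "w0 = (SOME w0. \<exists>a. w0 dvd 1 \<and> f = smult w0 (\<Prod>g\<in>P. g ^ a g) \<and> (\<forall>g\<in>P. a g \<ge> 1))"
definition "aa = (SOME a. w0 dvd 1 \<and> f = smult w0 (\<Prod>g\<in>P. g ^ a g) \<and> (\<forall>g\<in>P. a g \<ge> 1))"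

lemma w0_aa: "w0 dvd 1" "f = smult w0 (\<Prod>g\<in>P. g ^ aa g)" "\<forall>g\<in>P. aa g \<ge> 1"
proof -
  have "\<exists>a. w0 dvd 1 \<and> f = smult w0 (\<Prod>g\<in>P. g ^ a g) \<and> (\<forall>g\<in>P. a g \<ge> 1)"
    unfolding w0_def using f_fact by (rule someI_ex)
  then have "w0 dvd 1 \<and> f = smult w0 (\<Prod>g\<in>P. g ^ aa g) \<and> (\<forall>g\<in>P. aa g \<ge> 1)"
    unfolding aa_def by (rule someI_ex)
  then show "w0 dvd 1" "f = smult w0 (\<Prod>g\<in>P. g ^ aa g)" "\<forall>g\<in>P. aa g \<ge> 1" by auto
qed

lemma P_nonroot: assumes "g \<in> P" "poly f b \<noteq> 0" shows "poly g b \<noteq> 0"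
proof -
  obtain k where "f = g * k" using P_dvd[OF assms(1)] by (auto simp: dvd_def)
  then show ?thesis using assms(2) by auto
qed

lemma val_fact: assumes "w dvd 1" "poly f b \<noteq> 0"
  shows "val p (poly (smult w (\<Prod>g\<in>P. g ^ e g)) b) = (\<Sum>g\<in>P. e g * val p (poly g b))"
proof -
  have gnz: "\<forall>g\<in>P. poly g b \<noteq> 0" using P_nonroot assms(2) by blast
  have w: "w \<noteq> 0" using assms(1) by auto
  have pnz: "(\<Prod>g\<in>P. poly g b ^ e g) \<noteq> 0" using gnz P_finite by (simp add: prod_zero_iff)
  have "poly (smult w (\<Prod>g\<in>P. g ^ e g)) b = w * (\<Prod>g\<in>P. poly g b ^ e g)" by (simp add: poly_prod poly_power)
  then have "val p (poly (smult w (\<Prod>g\<in>P. g ^ e g)) b) = val p w + val p (\<Prod>g\<in>P. poly g b ^ e g)"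
    using w pnz val_mult by simp
  also have "\<dots> = (\<Sum>g\<in>P. val p (poly g b ^ e g))" using val_unit[OF assms(1)] gnz by (simp add: val_prod)
  also have "\<dots> = (\<Sum>g\<in>P. e g * val p (poly g b))" using gnz by (intro sum.cong) (auto simp: val_power)
  finally show ?thesis .
qed

lemma n_sum: assumes "b \<in> W" shows "(\<Sum>g\<in>P. aa g * val p (poly g b)) = n"
  using val_fact[OF w0_aa(1) W_nz[OF assms], of aa, folded w0_aa(2)] W_val[OF assms] by simp

lemma power_contra: assumes np: "\<not> (\<exists>h k. k \<ge> 2 \<and> assoc_poly f (h ^ k))"
  and d: "d \<ge> 2" "\<forall>g\<in>P. d dvd aa g" shows False
proof -
  define h where "h = (\<Prod>g\<in>P. g ^ (aa g div d))"
  have "h ^ d = (\<Prod>g\<in>P. (g ^ (aa g div d)) ^ d)" unfolding h_def by (simp add: prod_power_distrib)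
  also have "\<dots> = (\<Prod>g\<in>P. g ^ aa g)"
  proof (rule prod.cong)
    fix g assume "g \<in> P"
    then have "aa g div d * d = aa g" using d by simp
    then show "(g ^ (aa g div d)) ^ d = g ^ aa g" by (metis power_mult)
  qed simp
  finally have hd: "f = smult w0 (h ^ d)" using w0_aa(2) by simp
  obtain w2 where w2: "w0 * w2 = 1" using w0_aa(1) unit_inv by blast
  have w2': "w2 * w0 = 1" using w2 by (simp add: mult.commute)
  have "smult w2 f = smult (w2 * w0) (h ^ d)" by (subst hd) simp
  then have "h ^ d = smult w2 f" using w2' by simp
  then have "f dvd h ^ d" by (simp add: dvd_smult)
  moreover have "h ^ d dvd f" by (subst hd) (simp add: dvd_smult)
  ultimately have "assoc_poly f (h ^ d)" unfolding assoc_poly_def by simp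
  then show False using np d(1) by blast
qed

lemma exponent_lemma:
  assumes fdk: "fdk_zero p f P" and np: "\<not> (\<exists>h k. k \<ge> 2 \<and> assoc_poly f (h ^ k))"
    and gd: "g dvd f^k" and gW: "\<forall>b\<in>W. poly g b \<noteq> 0 \<and> m = int (val p (poly g b))"
  shows "\<exists>t w. w dvd 1 \<and> g = smult w (f^t) \<and> m = int (t * n)"
proof -
  obtain w1 e where we: "w1 dvd 1" "g = smult w1 (\<Prod>x\<in>P. x ^ e x)" using factor_exists[OF gd] by blast
  have mnn: "m \<ge> 0" using gW b0W by auto
  define M where "M = nat m"
  have Mb: "\<forall>b\<in>W. (\<Sum>x\<in>P. e x * val p (poly x b)) = M"
  proof
    fix b assume bW: "b \<in> W"
    have "val p (poly g b) = (\<Sum>x\<in>P. e x * val p (poly x b))"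
      using val_fact[OF we(1) W_nz[OF bW], of e, folded we(2)] .
    moreover have "m = int (val p (poly g b))" using gW bW by blast
    ultimately have "int (\<Sum>x\<in>P. e x * val p (poly x b)) = m" by simp
    then show "(\<Sum>x\<in>P. e x * val p (poly x b)) = M" unfolding M_def by (metis nat_int)
  qed
  define u where "u x = (of_nat (e x * n) - of_nat (aa x * M) :: rat)" for x
  have "\<forall>b\<in>W. (\<Sum>x\<in>P. u x * of_nat (val p (poly x b))) = 0"
  proof
    fix b assume bW: "b \<in> W"
    have "(\<Sum>x\<in>P. u x * of_nat (val p (poly x b))) =
          of_nat n * of_nat (\<Sum>x\<in>P. e x * val p (poly x b)) - of_nat M * of_nat (\<Sum>x\<in>P. aa x * val p (poly x b))"
      unfolding u_def by (simp add: sum_subtractf sum_distrib_left algebra_simps)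
    also have "\<dots> = 0" using Mb bW n_sum[OF bW] by simp
    finally show "(\<Sum>x\<in>P. u x * of_nat (val p (poly x b))) = 0" .
  qed
  then have "\<forall>x\<in>P. u x = 0" using fdk unfolding fdk_zero_def by blast
  then have eqs: "\<forall>x\<in>P. e x * n = aa x * M" unfolding u_def by (simp del: of_nat_mult)
  have "n dvd M"
  proof (rule ccontr)
    assume "\<not> n dvd M"
    then obtain d where "d \<ge> 2" "\<forall>x\<in>P. d dvd aa x" using nt_lemma[OF n1 eqs] by blast
    then show False using power_contra np by blast
  qed
  then obtain t where t: "M = n * t" by (auto simp: dvd_def)
  have ex: "\<forall>x\<in>P. e x = t * aa x" using eqs t n1 by (simp add: mult.commute)
  have "(\<Prod>x\<in>P. x ^ e x) = (\<Prod>x\<in>P. (x ^ aa x) ^ t)"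
  proof (rule prod.cong)
    fix x assume "x \<in> P"
    then have "e x = aa x * t" using ex by (simp add: mult.commute)
    then show "x ^ e x = (x ^ aa x) ^ t" by (simp add: power_mult)
  qed simp
  also have "\<dots> = (\<Prod>x\<in>P. x ^ aa x) ^ t" by (simp add: prod_power_distrib)
  finally have g1: "g = smult w1 ((\<Prod>x\<in>P. x ^ aa x) ^ t)" using we by simp
  obtain w2 where w2: "w0 * w2 = 1" using w0_aa(1) unit_inv by blast
  have w2': "w2 * w0 = 1" using w2 by (simp add: mult.commute)
  have "smult w2 f = smult (w2 * w0) (\<Prod>x\<in>P. x ^ aa x)" by (subst w0_aa(2)) simp
  then have "(\<Prod>x\<in>P. x ^ aa x) = smult w2 f" using w2' by simp
  then have "g = smult (w1 * w2 ^ t) (f ^ t)" using g1 by (simp add: smult_power)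
  moreover have "w1 * w2 ^ t dvd 1"
  proof -
    have "w2 dvd 1" using dvdI[of 1 w2 w0] w2' by simp
    then have "w2 ^ t dvd 1 ^ t" by (rule dvd_power_same)
    then show ?thesis using we(1) mult_dvd_mono[of w1 1 "w2^t" 1] by simp
  qed
  moreover have "m = int (t * n)"
  proof -
    have "int (nat m) = int (n * t)" using t unfolding M_def by simp
    then show ?thesis using mnn by (simp add: mult.commute)
  qed
  ultimately show ?thesis by blast
qed

end


lemma sum_list_mult_n: "sum_list (map (\<lambda>q. T q * (n::nat)) qs) = sum_list (map T qs) * n"
  by (induction qs) (auto simp: algebra_simps)

context mainl begin

lemma IntR_one: "1 \<in> IntR"
proof (unfold IntR_def, intro CollectI allI)
  fix a
  have "poly 1 (to_fract a) = to_fract 1" by simp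
  then show "poly 1 (to_fract a) \<in> range to_fract" by (simp only: rangeI)
qed

lemma IntR_FF_pow: "FF ^ j \<in> IntR"
  by (induction j) (auto simp: IntR_one IntR_mult FF_IntR)

lemma smult_const_mult: "smult c X = [:c:] * X" by simp

lemma IntR_smult_FF: "smult (to_fract v) (FF ^ j) \<in> IntR"
  using IntR_mult[OF IntR_const IntR_FF_pow] by (simp only: smult_const_mult)

lemma nonunit_FF: assumes "v dvd 1" "t \<ge> 1" shows "\<not> IntR_unit (smult (to_fract v) (FF ^ t))"
proof
  assume "IntR_unit (smult (to_fract v) (FF ^ t))"
  then have "degree (smult (to_fract v) (FF ^ t)) = 0" by (rule IntR_unit_deg)
  moreover have "v \<noteq> 0" using assms(1) by auto
  ultimately have "t * degree f = 0" using FF_deg by simp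
  then show False using assms(2) degf by simp
qed

lemma S2:
  assumes fdk: "fdk_zero p f P" and np: "\<not> (\<exists>h k. k \<ge> 2 \<and> assoc_poly f (h ^ k))"
    and qs: "\<forall>q\<in>set qs. q \<in> IntR" and pr: "prod_list qs = FF ^ k"
  shows "\<exists>T. (\<forall>q\<in>set qs. \<exists>v. v dvd 1 \<and> q = smult (to_fract v) (FF ^ T q)) \<and> sum_list (map T qs) = k"
proof -
  have each: "\<forall>q\<in>set qs. \<exists>t. (\<exists>v. v dvd 1 \<and> q = smult (to_fract v) (FF ^ t)) \<and> rm q = int (t * n)"
  proof
    fix q assume qin: "q \<in> set qs"
    have qnz: "q \<noteq> 0" using structural(5)[OF qs pr] qin by blast
    have gd: "rg q dvd f^k" using structural(3)[OF qs pr] qin by blast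
    have gW: "\<forall>b\<in>W. poly (rg q) b \<noteq> 0 \<and> rm q = int (val p (poly (rg q) b))"
      using structural(4)[OF qs pr] qin by blast
    obtain t w where tw: "w dvd 1" "rg q = smult w (f^t)" "rm q = int (t * n)"
      using exponent_lemma[OF fdk np gd gW] by blast
    have "q = smult (to_fract (ru q) * \<pi> powi (- int (t*n))) (smult (to_fract w) (fract_poly (f^t)))"
      using rep_spec(3)[OF qnz] tw by simp
    also have "\<dots> = smult (to_fract (ru q * w)) (smult (to_fract 1 * \<pi> powi (- int (t*n))) (fract_poly (f^t)))"
      by (simp add: mult_ac)
    also have "\<dots> = smult (to_fract (ru q * w)) (FF ^ t)" using FF_pow_rep by simp
    finally have "q = smult (to_fract (ru q * w)) (FF ^ t)" .
    moreover have "ru q * w dvd 1" using rep_spec(1)[OF qnz] tw(1) mult_dvd_mono[of "ru q" 1 w 1] by simp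
    ultimately show "\<exists>t. (\<exists>v. v dvd 1 \<and> q = smult (to_fract v) (FF ^ t)) \<and> rm q = int (t * n)"
      using tw(3) by blast
  qed
  from bchoice[OF each] obtain T where T: "\<forall>q\<in>set qs. (\<exists>v. v dvd 1 \<and> q = smult (to_fract v) (FF ^ T q)) \<and> rm q = int (T q * n)"
    by blast
  have "sum_list (map rm qs) = sum_list (map (\<lambda>q. int (T q * n)) qs)"
    using T by (intro arg_cong[of _ _ sum_list] map_cong) auto
  also have "\<dots> = int (sum_list (map (\<lambda>q. T q * n) qs))" by (simp only: int_sum_list)
  also have "\<dots> = int (sum_list (map T qs) * n)" by (simp only: sum_list_mult_n)
  finally have e1: "sum_list (map rm qs) = int (sum_list (map T qs) * n)" .
  have "int (sum_list (map T qs) * n) = int (k * n)" using e1 structural(1)[OF qs pr] by linarith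
  then have "sum_list (map T qs) * n = k * n" by (simp only: of_nat_eq_iff)
  then have "sum_list (map T qs) = k" using n1 by auto
  then show ?thesis using T by blast
qed

lemma back_dir:
  assumes fdk: "fdk_zero p f P" and np: "\<not> (\<exists>h k. k \<ge> 2 \<and> assoc_poly f (h ^ k))"
  shows "IntR_abs_irreducible FF"
proof -
  have FFnu: "\<not> IntR_unit FF" using nonunit_FF[of 1 1] by simp
  have irr: "IntR_irreducible FF"
    unfolding IntR_irreducible_def
  proof (intro conjI ballI impI)
    show "FF \<in> IntR" by (rule FF_IntR)
    show "FF \<noteq> 0" by (rule FF_nz)
    show "\<not> IntR_unit FF" by (rule FFnu)
  next
    fix G H assume G: "G \<in> IntR" and H: "H \<in> IntR" and GH: "FF = G * H"
    have l: "\<forall>q\<in>set [G, H]. q \<in> IntR" using G H by simp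
    have pr: "prod_list [G, H] = FF ^ 1" using GH by simp
    obtain T where T: "\<forall>q\<in>set [G,H]. \<exists>v. v dvd 1 \<and> q = smult (to_fract v) (FF ^ T q)"
      "sum_list (map T [G,H]) = 1" using S2[OF fdk np l pr] by blast
    have "T G + T H = 1" using T(2) by simp
    then have "T G = 0 \<or> T H = 0" by linarith
    then show "IntR_unit G \<or> IntR_unit H"
    proof
      assume "T G = 0"
      then obtain v where "v dvd 1" "G = [:to_fract v:]" using T(1) by auto
      then show ?thesis using IntR_unit_const by blast
    next
      assume "T H = 0"
      then obtain v where "v dvd 1" "H = [:to_fract v:]" using T(1) by auto
      then show ?thesis using IntR_unit_const by blast
    qed
  qed
  have abs: "length qs = k \<and> (\<forall>q\<in>set qs. IntR_assoc q FF)"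
    if k: "k \<ge> 1" and qs: "\<forall>q\<in>set qs. IntR_irreducible q" and pr: "prod_list qs = FF ^ k" for k qs
  proof -
    have l: "\<forall>q\<in>set qs. q \<in> IntR" using qs unfolding IntR_irreducible_def by blast
    obtain T where T: "\<forall>q\<in>set qs. \<exists>v. v dvd 1 \<and> q = smult (to_fract v) (FF ^ T q)"
      "sum_list (map T qs) = k" using S2[OF fdk np l pr] by blast
    have T1: "\<forall>q\<in>set qs. T q = 1"
    proof
      fix q assume qin: "q \<in> set qs"
      obtain v where v: "v dvd 1" "q = smult (to_fract v) (FF ^ T q)" using T(1) qin by blast
      have qirr: "IntR_irreducible q" using qs qin by blast
      show "T q = 1"
      proof (rule ccontr)
        assume ne: "T q \<noteq> 1"
        show False
        proof (cases "T q = 0")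
          case True
          then have "q = [:to_fract v:]" using v by simp
          then have "IntR_unit q" using IntR_unit_const v(1) by blast
          then show False using qirr unfolding IntR_irreducible_def by blast
        next
          case False
          then have t2: "T q \<ge> 2" using ne by simp
          have qeq: "q = smult (to_fract v) (FF ^ 1) * FF ^ (T q - 1)"
            using v(2) t2 by (simp add: power_Suc[symmetric] del: power_Suc)
          have A: "smult (to_fract v) (FF ^ 1) \<in> IntR" by (rule IntR_smult_FF)
          have B: "FF ^ (T q - 1) \<in> IntR" by (rule IntR_FF_pow)
          have "IntR_unit (smult (to_fract v) (FF ^ 1)) \<or> IntR_unit (FF ^ (T q - 1))"
            using qirr qeq A B unfolding IntR_irreducible_def by blast
          moreover have "\<not> IntR_unit (smult (to_fract v) (FF ^ 1))" using nonunit_FF[OF v(1), of 1] by simp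
          moreover have "\<not> IntR_unit (smult (to_fract 1) (FF ^ (T q - 1)))" using nonunit_FF[of 1 "T q - 1"] t2 by simp
          ultimately show False by simp
        qed
      qed
    qed
    have "sum_list (map T qs) = sum_list (map (\<lambda>_. 1::nat) qs)" using T1 by (intro arg_cong[of _ _ sum_list] map_cong) auto
    then have "length qs = k" using T(2) by (simp add: sum_list_triv)
    moreover have "\<forall>q\<in>set qs. IntR_assoc q FF"
    proof
      fix q assume qin: "q \<in> set qs"
      obtain v where v: "v dvd 1" "q = smult (to_fract v) (FF ^ T q)" using T(1) qin by blast
      then have "q = [:to_fract v:] * FF" using T1 qin by simp
      then show "IntR_assoc q FF" unfolding IntR_assoc_def using IntR_unit_const v(1) by blast
    qed
    ultimately show ?thesis by blast
  qed
  show ?thesis unfolding IntR_abs_irreducible_def using irr abs by blast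
qed

end


lemma rat_to_int_vector:
  fixes u :: "'b \<Rightarrow> rat"
  assumes fin: "finite A"
  shows "\<exists>D z. D > 0 \<and> (\<forall>x\<in>A. of_int (z x) = u x * of_int D)"
proof -
  define D where "D = (\<Prod>x\<in>A. snd (quotient_of (u x)))"
  have Dpos: "D > 0" unfolding D_def using quotient_of_denom_pos' by (intro prod_pos) auto
  define z where "z x = fst (quotient_of (u x)) * (D div snd (quotient_of (u x)))" for x
  have "\<forall>x\<in>A. of_int (z x) = u x * of_int D"
  proof
    fix x assume xA: "x \<in> A"
    obtain a b where ab: "quotient_of (u x) = (a, b)" by (cases "quotient_of (u x)")
    have ux: "u x = of_int a / of_int b" using quotient_of_div[OF ab] .
    have bpos: "b > 0" using quotient_of_denom_pos[OF ab] .
    have bD: "b dvd D" unfolding D_def using xA fin ab by (metis dvd_prod_eqI snd_conv)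
    have "of_int (z x) = (of_int a * (of_int D / of_int b) :: rat)" unfolding z_def ab using bD by (simp add: of_int_div)
    also have "\<dots> = u x * of_int D" unfolding ux by simp
    finally show "of_int (z x) = u x * of_int D" .
  qed
  then show ?thesis using Dpos by blast
qed

lemma key_ineq:
  fixes N C V n S :: int
  assumes "N = C * (n + 1) + 1" "C \<ge> 0" "V \<ge> n + 1" "S \<ge> - C * V" "n \<ge> 0"
  shows "N * V + S \<ge> N * n"
proof -
  have "N * V + S \<ge> (N - C) * V" using assms(4) by (simp add: algebra_simps)
  moreover have "(N - C) * V \<ge> (N - C) * (n + 1)"
    using assms by (intro mult_left_mono) (auto simp: algebra_simps)
  moreover have "(N - C) * (n + 1) = N * n + 1" using assms(1) by (simp add: algebra_simps)
  ultimately show ?thesis by linarith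
qed

context mainl begin

lemma prim_prod_S: "finite S \<Longrightarrow> S \<subseteq> P \<Longrightarrow> prim (\<Prod>g\<in>S. g ^ e g)"
proof (induction S rule: finite_induct)
  case empty then show ?case by (simp add: prim_1)
next
  case (insert x F)
  then have "prim (x ^ e x)" using P_prim prim_power by blast
  moreover have "prim (\<Prod>g\<in>F. g ^ e g)" using insert by simp
  ultimately show ?case using insert(1,2) by (simp add: prim_mult)
qed

lemma prim_prod_P: "prim (\<Prod>g\<in>P. g ^ e g)"
  using prim_prod_S[OF P_finite] by simp

lemma P_ne: "P \<noteq> {}"
proof
  assume "P = {}"
  then have "f = [:w0:]" using w0_aa(2) by simp
  then have "degree f = degree [:w0:]" by (rule arg_cong)
  then show False using degf by simp
qed

lemma deg_prod_P: assumes "\<forall>g\<in>P. e g \<ge> 1" shows "degree (\<Prod>g\<in>P. g ^ e g) \<ge> 1"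
proof -
  obtain g where gP: "g \<in> P" using P_ne by blast
  have nz: "\<forall>x\<in>P. x ^ e x \<noteq> 0" using P_nz by simp
  have d: "degree (\<Prod>g\<in>P. g ^ e g) = (\<Sum>g\<in>P. degree (g ^ e g))"
    using nz by (intro degree_prod_eq_sum_degree) auto
  have "degree (g ^ e g) \<le> (\<Sum>g\<in>P. degree (g ^ e g))" using gP P_finite by (intro member_le_sum) auto
  moreover have "degree (g ^ e g) = e g * degree g" using P_nz[OF gP] by (simp add: degree_power_eq)
  moreover have "e g * degree g \<ge> 1" using assms gP P_deg[OF gP] by simp
  ultimately show ?thesis using d by linarith
qed

lemma val_f: "poly f a \<noteq> 0 \<Longrightarrow> val p (poly f a) = (\<Sum>g\<in>P. aa g * val p (poly g a))"
  using val_fact[OF w0_aa(1), of a aa, folded w0_aa(2)] by simp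

lemma ineq_lemma:
  assumes orth: "\<forall>b\<in>W. (\<Sum>g\<in>P. y g * int (val p (poly g b))) = 0"
    and C: "C = (\<Sum>g\<in>P. \<bar>y g\<bar>)" and N: "N = C * (int n + 1) + 1" and fa: "poly f a \<noteq> 0"
  shows "(\<Sum>g\<in>P. (N * int (aa g) + y g) * int (val p (poly g a))) \<ge> N * int n"
proof -
  define v where "v g = int (val p (poly g a))" for g
  define V where "V = (\<Sum>g\<in>P. int (aa g) * v g)"
  have Vf: "V = int (val p (poly f a))" unfolding V_def v_def using val_f[OF fa] by simp
  have split: "(\<Sum>g\<in>P. (N * int (aa g) + y g) * v g) = N * V + (\<Sum>g\<in>P. y g * v g)"
    unfolding V_def by (simp add: algebra_simps sum.distrib sum_distrib_left)
  have vnn: "\<forall>g\<in>P. v g \<ge> 0" unfolding v_def by simp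
  have vle: "\<forall>g\<in>P. v g \<le> V"
  proof
    fix g assume gP: "g \<in> P"
    have "1 \<le> int (aa g)" "0 \<le> v g" using w0_aa(3) gP vnn by auto
    then have "1 * v g \<le> int (aa g) * v g" by (rule mult_right_mono)
    then have "v g \<le> int (aa g) * v g" by simp
    also have "\<dots> \<le> V" unfolding V_def using gP P_finite vnn
      by (intro member_le_sum) (auto)
    finally show "v g \<le> V" .
  qed
  show ?thesis
  proof (cases "val p (poly f a) = n")
    case True
    then have "a \<in> W" using fa unfolding W_set_def by simp
    then have "(\<Sum>g\<in>P. y g * v g) = 0" using orth unfolding v_def by blast
    then show ?thesis using split Vf True unfolding v_def by simp
  next
    case False
    then have Vn: "V \<ge> int n + 1" using vd_le[OF fa] Vf by simp
    have "(\<Sum>g\<in>P. y g * v g) \<ge> (\<Sum>g\<in>P. - \<bar>y g\<bar> * V)"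
    proof (rule sum_mono)
      fix g assume gP: "g \<in> P"
      have "- \<bar>y g\<bar> \<le> y g" by (simp add: abs_if)
      then have "(- \<bar>y g\<bar>) * v g \<le> y g * v g" using vnn gP by (intro mult_right_mono) auto
      then have "y g * v g \<ge> - \<bar>y g\<bar> * v g" by simp
      moreover have "- \<bar>y g\<bar> * v g \<ge> - \<bar>y g\<bar> * V" using vle gP by (simp add: mult_left_mono)
      ultimately show "y g * v g \<ge> - \<bar>y g\<bar> * V" by linarith
    qed
    moreover have "(\<Sum>g\<in>P. - \<bar>y g\<bar> * V) = - C * V" unfolding C by (simp add: sum_distrib_right sum_negf)
    ultimately have S: "(\<Sum>g\<in>P. y g * v g) \<ge> - C * V" by simp
    have "C \<ge> 0" unfolding C by (simp add: sum_nonneg)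
    then have "N * V + (\<Sum>g\<in>P. y g * v g) \<ge> N * int n" using key_ineq[OF N _ Vn S] by simp
    then show ?thesis using split unfolding v_def by simp
  qed
qed

end


context mainl begin

lemma unit_power': "(w::'a) dvd 1 \<Longrightarrow> w ^ k dvd 1"
  using dvd_power_same[of w 1 k] by simp

lemma h_IntR:
  fixes N :: nat
  assumes orth: "\<forall>b\<in>W. (\<Sum>g\<in>P. y g * int (val p (poly g b))) = 0"
    and C: "C = (\<Sum>g\<in>P. \<bar>y g\<bar>)" and N: "int N = C * (int n + 1) + 1"
    and e: "\<forall>g\<in>P. int (e g) = int N * int (aa g) + y g"
  shows "smult (to_fract (w0 ^ N) * \<pi> powi (- int (N * n))) (fract_poly (\<Prod>g\<in>P. g ^ e g)) \<in> IntR"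
proof (subst IntR_rep[OF unit_power'[OF w0_aa(1)]], intro allI)
  fix a
  define h where "h = (\<Prod>g\<in>P. g ^ e g)"
  show "int (N * n) \<le> 0 \<or> p ^ nat (int (N * n)) dvd poly (\<Prod>g\<in>P. g ^ e g) a"
  proof (cases "poly h a = 0")
    case True then show ?thesis unfolding h_def by simp
  next
    case False
    have ph: "poly h a = (\<Prod>g\<in>P. poly g a ^ e g)" unfolding h_def by (simp add: poly_prod poly_power)
    have gnz: "\<forall>g\<in>P. poly g a \<noteq> 0"
    proof
      fix g assume gP: "g \<in> P"
      have Cnn: "C \<ge> 0" unfolding C by (simp add: sum_nonneg)
      have "\<bar>y g\<bar> \<le> C" unfolding C using gP P_finite by (intro member_le_sum) auto
      moreover have "int N * int (aa g) \<ge> int N"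
      proof -
        have "int (aa g) \<ge> 1" using w0_aa(3) gP by simp
        then have "int N * 1 \<le> int N * int (aa g)" by (intro mult_left_mono) auto
        then show ?thesis by simp
      qed
      moreover have "int N \<ge> C + 1" using N Cnn by (simp add: algebra_simps)
      moreover have "int (e g) = int N * int (aa g) + y g" using e gP by blast
      moreover have "- \<bar>y g\<bar> \<le> y g" by (simp add: abs_if)
      ultimately have "int (e g) \<ge> 1" by linarith
      then have "e g \<noteq> 0" by simp
      moreover have "poly g a ^ e g \<noteq> 0" using False ph gP P_finite by (simp add: prod_zero_iff)
      ultimately show "poly g a \<noteq> 0" by simp
    qed
    have fa: "poly f a \<noteq> 0"
    proof -
      have "poly f a = w0 * (\<Prod>g\<in>P. poly g a ^ aa g)" by (subst w0_aa(2)) (simp add: poly_prod poly_power)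
      moreover have "w0 \<noteq> 0" using w0_aa(1) by auto
      ultimately show ?thesis using gnz P_finite by (simp add: prod_zero_iff)
    qed
    have "val p (poly (smult 1 h) a) = (\<Sum>g\<in>P. e g * val p (poly g a))"
      unfolding h_def by (rule val_fact[OF one_dvd fa])
    then have "int (val p (poly h a)) = (\<Sum>g\<in>P. int (e g) * int (val p (poly g a)))" by simp
    also have "\<dots> = (\<Sum>g\<in>P. (int N * int (aa g) + y g) * int (val p (poly g a)))"
      using e by (intro sum.cong) auto
    also have "\<dots> \<ge> int N * int n" using ineq_lemma[OF orth C N fa] .
    finally have "N * n \<le> val p (poly h a)" by (simp add: of_nat_mult[symmetric] del: of_nat_mult)
    then have "p ^ (N * n) dvd poly h a" using val_dvd_iff[OF False] by blast
    moreover have "nat (int (N * n)) = N * n" by (simp only: nat_int)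
    ultimately show ?thesis unfolding h_def by (intro disjI2) (simp only:)
  qed
qed

end


context mainl begin

lemma assoc_prod: assumes "\<forall>q\<in>set qs. IntR_assoc q FF"
  shows "\<exists>V. V dvd 1 \<and> prod_list qs = smult (to_fract V) (FF ^ length qs)"
  using assms
proof (induction qs)
  case Nil then show ?case by (intro exI[of _ 1]) simp
next
  case (Cons q qs)
  obtain V where V: "V dvd 1" "prod_list qs = smult (to_fract V) (FF ^ length qs)" using Cons by auto
  obtain u where u: "IntR_unit u" "q = u * FF" using Cons(2) unfolding IntR_assoc_def by auto
  obtain v where v: "v dvd 1" "u = [:to_fract v:]" using IntR_unit_form[OF u(1)] by blast
  have "prod_list (q # qs) = smult (to_fract (v * V)) (FF ^ length (q # qs))"
    using V(2) u(2) v(2) by (simp add: mult_ac)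
  moreover have "v * V dvd 1" using v(1) V(1) mult_dvd_mono[of v 1 V 1] by simp
  ultimately show ?case by blast
qed

lemma pos_lemma:
  assumes C: "C = (\<Sum>g\<in>P. \<bar>y g\<bar>)" and N: "int N = C * (int n + 1) + 1" and gP: "g \<in> P"
  shows "int N * int (aa g) + y g \<ge> 1"
proof -
  have Cnn: "C \<ge> 0" unfolding C by (simp add: sum_nonneg)
  have "\<bar>y g\<bar> \<le> C" unfolding C using gP P_finite by (intro member_le_sum) auto
  moreover have "int N * int (aa g) \<ge> int N"
  proof -
    have "int (aa g) \<ge> 1" using w0_aa(3) gP by simp
    then have "int N * 1 \<le> int N * int (aa g)" by (intro mult_left_mono) auto
    then show ?thesis by simp
  qed
  moreover have "int N \<ge> C + 1" using N Cnn by (simp add: algebra_simps)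
  moreover have "- \<bar>y g\<bar> \<le> y g" by (simp add: abs_if)
  ultimately show ?thesis by linarith
qed

lemma forward_dir: assumes abs: "IntR_abs_irreducible FF" shows "fdk_zero p f P"
proof (rule ccontr)
  assume "\<not> fdk_zero p f P"
  then have "\<exists>u :: 'a poly \<Rightarrow> rat. (\<forall>a\<in>W. (\<Sum>g\<in>P. u g * of_nat (val p (poly g a))) = 0) \<and> (\<exists>g\<in>P. u g \<noteq> 0)"
    unfolding fdk_zero_def by simp
  then obtain u :: "'a poly \<Rightarrow> rat" where
    orth_u: "\<forall>a\<in>W. (\<Sum>g\<in>P. u g * of_nat (val p (poly g a))) = 0" and ex0: "\<exists>g\<in>P. u g \<noteq> 0"
    by (elim exE conjE) (rule that)
  from ex0 obtain g0 where g0: "g0 \<in> P" "u g0 \<noteq> 0" by (elim bexE) (rule that)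
  obtain D z where Dz: "D > 0" "\<forall>g\<in>P. of_int (z g) = u g * of_int D"
    using rat_to_int_vector[OF P_finite, of u] by blast
  have orth: "\<forall>b\<in>W. (\<Sum>g\<in>P. z g * int (val p (poly g b))) = 0"
  proof
    fix b assume bW: "b \<in> W"
    have "(of_int (\<Sum>g\<in>P. z g * int (val p (poly g b))) :: rat) = (\<Sum>g\<in>P. of_int (z g) * of_nat (val p (poly g b)))"
      by simp
    also have "\<dots> = (\<Sum>g\<in>P. of_int D * (u g * of_nat (val p (poly g b))))"
      using Dz(2) by (intro sum.cong) auto
    also have "\<dots> = of_int D * (\<Sum>g\<in>P. u g * of_nat (val p (poly g b)))" by (simp add: sum_distrib_left)
    also have "\<dots> = 0" using orth_u bW by simp
    finally show "(\<Sum>g\<in>P. z g * int (val p (poly g b))) = 0" by (simp only: of_int_eq_0_iff)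
  qed
  have orth2: "\<forall>b\<in>W. (\<Sum>g\<in>P. (- z g) * int (val p (poly g b))) = 0"
    using orth by (simp add: sum_negf)
  have zg0: "z g0 \<noteq> 0" using Dz g0 by auto
  define C where "C = (\<Sum>g\<in>P. \<bar>z g\<bar>)"
  have C2: "C = (\<Sum>g\<in>P. \<bar>- z g\<bar>)" unfolding C_def by simp
  have Cnn: "C \<ge> 0" unfolding C_def by (simp add: sum_nonneg)
  define N where "N = nat (C * (int n + 1) + 1)"
  have N: "int N = C * (int n + 1) + 1" unfolding N_def using Cnn by simp
  have "C * int n \<ge> 0" using Cnn by simp
  then have "int N \<ge> 1" using N Cnn by (simp add: algebra_simps)
  then have N1: "N \<ge> 1" by simp
  define e1 where "e1 g = nat (int N * int (aa g) + z g)" for g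
  define e2 where "e2 g = nat (int N * int (aa g) + (- z g))" for g
  have e1: "\<forall>g\<in>P. int (e1 g) = int N * int (aa g) + z g"
    using pos_lemma[OF C_def N] unfolding e1_def by fastforce
  have e2: "\<forall>g\<in>P. int (e2 g) = int N * int (aa g) + (- z g)"
    using pos_lemma[OF C2 N] unfolding e2_def by fastforce
  have e1p: "\<forall>g\<in>P. e1 g \<ge> 1" using pos_lemma[OF C_def N] unfolding e1_def by fastforce
  have e2p: "\<forall>g\<in>P. e2 g \<ge> 1" using pos_lemma[OF C2 N] unfolding e2_def by fastforce
  define h1 where "h1 = (\<Prod>g\<in>P. g ^ e1 g)"
  define h2 where "h2 = (\<Prod>g\<in>P. g ^ e2 g)"
  define A where "A = smult (to_fract (w0 ^ N) * \<pi> powi (- int (N * n))) (fract_poly h1)"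
  define B where "B = smult (to_fract (w0 ^ N) * \<pi> powi (- int (N * n))) (fract_poly h2)"
  have AI: "A \<in> IntR" unfolding A_def h1_def by (rule h_IntR[OF orth C_def N e1])
  have BI: "B \<in> IntR" unfolding B_def h2_def by (rule h_IntR[OF orth2 C2 N e2])
  have hh: "h1 * h2 = (\<Prod>g\<in>P. g ^ aa g) ^ (2 * N)"
  proof -
    have "h1 * h2 = (\<Prod>g\<in>P. g ^ e1 g * g ^ e2 g)" unfolding h1_def h2_def by (simp add: prod.distrib)
    also have "\<dots> = (\<Prod>g\<in>P. (g ^ aa g) ^ (2 * N))"
    proof (rule prod.cong)
      fix g assume gP: "g \<in> P"
      have "int (e1 g + e2 g) = int (aa g * (2 * N))" using e1 e2 gP by (simp add: algebra_simps)
      then have "e1 g + e2 g = aa g * (2 * N)" by (simp only: of_nat_eq_iff)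
      then show "g ^ e1 g * g ^ e2 g = (g ^ aa g) ^ (2 * N)" by (simp add: power_add[symmetric] power_mult)
    qed simp
    also have "\<dots> = (\<Prod>g\<in>P. g ^ aa g) ^ (2 * N)" by (simp add: prod_power_distrib)
    finally show ?thesis .
  qed
  have ff: "f ^ (2 * N) = smult (w0 ^ (2 * N)) (h1 * h2)"
    unfolding hh by (subst w0_aa(2)) (simp add: smult_power)
  have AB: "A * B = FF ^ (2 * N)"
  proof -
    have "A * B = smult ((\<pi> powi (- int (N * n)) * \<pi> powi (- int (N * n))) * to_fract (w0 ^ N * w0 ^ N)) (fract_poly (h1 * h2))"
      unfolding A_def B_def by (simp add: mult_ac)
    also have "\<pi> powi (- int (N * n)) * \<pi> powi (- int (N * n)) = \<pi> powi (- int ((2 * N) * n))"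
      using pi_nz by (simp add: power_int_add[symmetric] algebra_simps)
    also have "w0 ^ N * w0 ^ N = w0 ^ (2 * N)" by (simp add: power_add[symmetric] mult_2)
    also have "smult (\<pi> powi (- int (2 * N * n)) * to_fract (w0 ^ (2 * N))) (fract_poly (h1 * h2))
       = smult (to_fract 1 * \<pi> powi (- int (2 * N * n))) (fract_poly (smult (w0 ^ (2 * N)) (h1 * h2)))"
      by (simp add: mult_ac)
    also have "\<dots> = FF ^ (2 * N)" unfolding ff[symmetric] FF_pow_rep ..
    finally show ?thesis .
  qed
  have w0N: "w0 ^ N dvd 1" using unit_power'[OF w0_aa(1)] .
  have Anz: "to_fract (w0 ^ N) * \<pi> powi (- int (N * n)) \<noteq> 0" using w0N pi_nz w0_aa(1) by (auto simp: power_int_not_zero)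
  have degA: "degree A \<ge> 1" unfolding A_def h1_def using Anz deg_prod_P[OF e1p] by (simp add: degree_map_poly)
  have degB: "degree B \<ge> 1" unfolding B_def h2_def using Anz deg_prod_P[OF e2p] by (simp add: degree_map_poly)
  have nuA: "\<not> IntR_unit A" using degA IntR_unit_deg by fastforce
  have nuB: "\<not> IntR_unit B" using degB IntR_unit_deg by fastforce
  obtain qa where qa: "\<forall>q\<in>set qa. IntR_irreducible q" "prod_list qa = A" using atomic[OF AI BI AB nuA] by blast
  have BA: "B * A = FF ^ (2 * N)" using AB by (simp add: mult.commute)
  obtain qb where qb: "\<forall>q\<in>set qb. IntR_irreducible q" "prod_list qb = B" using atomic[OF BI AI BA nuB] by blast
  have "\<forall>q\<in>set (qa @ qb). IntR_irreducible q" using qa qb by auto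
  moreover have "prod_list (qa @ qb) = FF ^ (2 * N)" using qa qb AB by simp
  moreover have "2 * N \<ge> 1" using N1 by simp
  ultimately have "\<forall>q\<in>set (qa @ qb). IntR_assoc q FF"
    using abs unfolding IntR_abs_irreducible_def by blast
  then have "\<forall>q\<in>set qa. IntR_assoc q FF" by simp
  then obtain V where V: "V dvd 1" "A = smult (to_fract V) (FF ^ length qa)" using assoc_prod qa(2) by blast
  have "smult (to_fract (w0 ^ N) * \<pi> powi (- int (N * n))) (fract_poly h1)
      = smult (to_fract V * \<pi> powi (- int (length qa * n))) (fract_poly (f ^ length qa))"
    using V(2) unfolding A_def FF_pow_rep by (simp add: mult_ac)
  from rep_unique[OF this prim_prod_P[of e1, folded h1_def] fk_prim w0N V(1)]
  obtain w where w: "int (N * n) = int (length qa * n)" "w dvd 1" "f ^ length qa = smult w h1" by blast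
  have "length qa = N" using w(1) n1 by simp
  then have fN: "f ^ N = smult w h1" using w(3) by simp
  have "f ^ N = smult (w0 ^ N) ((\<Prod>g\<in>P. g ^ aa g) ^ N)" by (subst w0_aa(2)) (simp add: smult_power)
  also have "(\<Prod>g\<in>P. g ^ aa g) ^ N = (\<Prod>g\<in>P. g ^ (aa g * N))" by (simp add: prod_power_distrib power_mult)
  finally have "smult (w0 ^ N) (\<Prod>g\<in>P. g ^ (aa g * N)) = smult w (\<Prod>g\<in>P. g ^ e1 g)" using fN unfolding h1_def by simp
  from factor_unique[OF this w0N w(2)] have "aa g0 * N = e1 g0" using g0(1) by blast
  then have "int (aa g0 * N) = int N * int (aa g0) + z g0" using e1 g0(1) by simp
  then show False using zg0 by (simp add: mult.commute)
qed

end


theorem theorem2: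
  fixes p :: "'a::idom" and f :: "'a poly" and P :: "'a poly set"
  assumes "dvr_with_uniformizer p"
    and "finite_residue_field p"
    and "primitive_poly f"
    and "degree f \<ge> 1"
    and "vd p f \<ge> 1"
    and "\<not> (\<exists>h k. k \<ge> 2 \<and> assoc_poly f (h ^ k))"
    and "irreducible_divisor_set f P"
  shows "IntR_abs_irreducible (smult (inverse (to_fract p ^ vd p f)) (fract_poly f))
         \<longleftrightarrow> fdk_zero p f P"
proof -
  interpret dvr p by (rule dvr.intro) (rule assms(1))
  have pf: "prim f" using primitive_prim assms(3) by blast
  interpret mainl p f P by unfold_locales (use pf assms in auto)
  have FF_eq: "smult (inverse (to_fract p ^ vd p f)) (fract_poly f) = FF" by (simp add: FF_def)
  show ?thesis unfolding FF_eq using forward_dir back_dir assms(6) by blast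
qed


end
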